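(* Let $k\ge0$ and $N\ge0$ be integers and $a,b,c,d,e,f\in\mathbb{C}$ generic. For a polynomial $Q$ with $Q(N)\ne0$, put $R(n)=Q(N-n)/Q(N)$ and $$L_Q=\sum_{n=0}^N\frac{(a)_n(1+\tfrac a2)_n(b)_n(c)_n(d)_n(e)_n(-N)_n}{n!\,(\tfrac a2)_n(1+a-b)_n(1+a-c)_n(1+a-d)_n(1+a-e)_n(1+a+N)_n}\,R(n).$$ (i) If $Q(n)=Q_k^{(2)}(n;-a-2N;d-a-N,e-a-N)$, then $$L_Q=\frac{1}{Q(N)}\,\frac{(1+a)_N(1-k+a-d-e)_N}{(1+a-d)_N(1+a-e)_N}\;{}_4F_3\!\left[\begin{matrix}1+a-b-c,\ d,\ e,\ -N\\ 1+a-b,\ 1+a-c,\ k-a+d+e-N\end{matrix}\,\Big|\,1\right].$$ (ii) If $Q(n)=Q_k^{(2)}(n;-a-2N;d-a-N,e-a-N,f-a-N)$, then $$L_Q=\frac{1}{Q(N)}\,\frac{(1+a)_N(1-k+a-d-e)_N(1-k+a-f)_N}{(1+a-d)_N(1+a-e)_N(1+a-f)_N}\;{}_5F_4\!\left[\begin{matrix}1+a-b-c,\ d,\ e,\ 1+a-f,\ -N\\ 1+a-b,\ 1+a-c,\ k-a+d+e-N,\ 1-k+a-f\end{matrix}\,\Big|\,1\right].$$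
   Context: $(c)_n$ denotes the Pochhammer symbol, $(c)_0=1$; ${}_pF_q(1)$ denotes the (terminating) generalized hypergeometric series at argument $1$. The polynomials are $Q_k^{(2)}(n;\alpha;\beta,\gamma)=\sum_{j=0}^k\frac{(-n)_j(n+\alpha)_j(-k)_j}{j!(\beta)_j(\gamma)_j}$ and $Q_k^{(2)}(n;\alpha;\beta,\gamma,\delta)=\sum_{j=0}^k\frac{(-n)_j(n+\alpha)_j(-k)_j(k-1-\alpha+\beta+\gamma+\delta)_j}{j!(\beta)_j(\gamma)_j(\delta)_j}$. Parameters are generic so that no lower parameter is a nonpositive integer (among the first $N$ Pochhammer factors) and no denominator vanishes. *)

theory Defs
  imports Complex_Main
begin

text \<open>With an upper parameter -N and M = N this is the full terminating series.\<close>
definition hypF :: "complex list \<Rightarrow> complex list \<Rightarrow> nat \<Rightarrow> complex" where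
  "hypF ups lows M = (\<Sum>j=0..M. prod_list (map (\<lambda>u. pochhammer u j) ups) /
       (fact j * prod_list (map (\<lambda>l. pochhammer l j) lows)))"

definition Q2_2 :: "nat \<Rightarrow> complex \<Rightarrow> complex \<Rightarrow> complex \<Rightarrow> complex \<Rightarrow> complex" where
  "Q2_2 k n \<alpha> \<beta> \<gamma> = (\<Sum>j=0..k. pochhammer (-n) j * pochhammer (n + \<alpha>) j * pochhammer (- of_nat k) j /
       (fact j * pochhammer \<beta> j * pochhammer \<gamma> j))"

definition Q2_3 :: "nat \<Rightarrow> complex \<Rightarrow> complex \<Rightarrow> complex \<Rightarrow> complex \<Rightarrow> complex \<Rightarrow> complex" where
  "Q2_3 k n \<alpha> \<beta> \<gamma> \<delta> = (\<Sum>j=0..k. pochhammer (-n) j * pochhammer (n + \<alpha>) j * pochhammer (- of_nat k) j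
       * pochhammer (of_nat k - 1 - \<alpha> + \<beta> + \<gamma> + \<delta>) j /
       (fact j * pochhammer \<beta> j * pochhammer \<gamma> j * pochhammer \<delta> j))"

definition LQ :: "complex \<Rightarrow> complex \<Rightarrow> complex \<Rightarrow> complex \<Rightarrow> complex \<Rightarrow> nat \<Rightarrow> (complex \<Rightarrow> complex) \<Rightarrow> complex" where
  "LQ a b c d e N Q = (\<Sum>n=0..N.
     pochhammer a n * pochhammer (1 + a/2) n * pochhammer b n * pochhammer c n * pochhammer d n
       * pochhammer e n * pochhammer (- of_nat N) n /
     (fact n * pochhammer (a/2) n * pochhammer (1 + a - b) n * pochhammer (1 + a - c) n
       * pochhammer (1 + a - d) n * pochhammer (1 + a - e) n * pochhammer (1 + a + of_nat N) n)
     * (Q (of_nat N - of_nat n) / Q (of_nat N)))"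

end

theory Submission
  imports Defs
begin

lemma binom_rel: "of_nat (Suc k0) * (of_nat (Suc k0 + m choose Suc k0) :: complex)
   = (of_nat m + 1) * of_nat (Suc k0 + m choose k0)"
proof -
  have "Suc k0 * (Suc k0 + m choose Suc k0) = (Suc k0 + m - k0) * (Suc k0 + m choose k0)"
    using binomial_absorption[of k0 "Suc k0 + m"] binomial_absorb_comp[of "Suc k0 + m" k0] by simp
  hence "Suc k0 * (Suc k0 + m choose Suc k0) = (Suc m) * (Suc k0 + m choose k0)"
    by simp
  hence "(of_nat (Suc k0 * (Suc k0 + m choose Suc k0)) :: complex) = of_nat ((Suc m) * (Suc k0 + m choose k0))"
    by (rule arg_cong)
  thus ?thesis by (simp only: of_nat_mult of_nat_Suc add.commute)
qed

lemma saal_poly: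
  "(\<Sum>k=0..n. of_nat (n choose k) * pochhammer A k * pochhammer B k
      * pochhammer (C + of_nat k) (n-k) * pochhammer (C-A-B) (n-k))
   = pochhammer (C-A) n * pochhammer (C-B) n" for A B C :: complex
proof (induction n arbitrary: C)
  case 0
  then show ?case by simp
next
  case (Suc n)
  define t where "t = (\<lambda>n k C. of_nat (n choose k) * pochhammer A k * pochhammer B k
      * pochhammer (C + of_nat k) (n-k) * pochhammer (C-A-B) (n-k))"
  define g where "g = (\<lambda>k. if k = 0 then 0 else - of_nat (n choose (k-1)) * pochhammer A k * pochhammer B k
      * pochhammer (C + of_nat k) (Suc n - k) * pochhammer (C+1-A-B) (Suc n - k) :: complex)"
  have IH: "(\<Sum>k=0..n. t n k (C+1)) = pochhammer (C+1-A) n * pochhammer (C+1-B) n"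
    using Suc.IH[of "C+1"] unfolding t_def by (simp add: algebra_simps)
  have ext: "(\<Sum>k=0..Suc n. t n k (C+1)) = (\<Sum>k=0..n. t n k (C+1))"
    by (simp add: t_def)
  have trm: "t (Suc n) k C - (C-A)*(C-B) * t n k (C+1) = g (Suc k) - g k" if "k \<le> Suc n" for k
  proof -
    consider "k = 0" | "k = Suc n" | k0 m where "k = Suc k0" "n = Suc k0 + m"
      using \<open>k \<le> Suc n\<close> by (metis Suc_le_D add_Suc le_SucE less_eq_Suc_le not0_implies_Suc le_add_diff_inverse nat_le_linear not_less_eq_eq)
    then show ?thesis
    proof cases
      case 1
      then show ?thesis
        by (simp add: t_def g_def pochhammer_rec pochhammer_Suc algebra_simps)
    next
      case 2
      then show ?thesis
        by (simp add: t_def g_def binomial_eq_0)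
    next
      case 3
      have bc: "of_nat (Suc k0) * (of_nat (Suc k0 + m choose Suc k0) :: complex)
             = (of_nat m + 1) * of_nat (Suc k0 + m choose k0)" by (rule binom_rel)
      define X where "X = pochhammer A k * pochhammer B k * pochhammer (C + of_nat k + 1) m * pochhammer (C+1-A-B) m"
      have e1: "t (Suc n) k C = of_nat (Suc n choose k) * (C + of_nat k) * (C-A-B) * X"
        unfolding t_def X_def using 3
        by (simp add: pochhammer_rec algebra_simps)
      have e2: "t n k (C+1) = of_nat (n choose k) * X"
        unfolding t_def X_def using 3 by (simp add: algebra_simps)
      have e3: "g (Suc k) = - of_nat (n choose k) * (A + of_nat k) * (B + of_nat k) * X"
        unfolding g_def X_def using 3 by (simp add: pochhammer_Suc algebra_simps)
      have sm: "Suc n - k = Suc m" using 3 by simp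
      have p1: "pochhammer (C + of_nat k) (Suc m) = (C + of_nat k) * pochhammer (C + of_nat k + 1) m"
        by (simp add: pochhammer_rec)
      have p2: "pochhammer (C+1-A-B) (Suc m) = pochhammer (C+1-A-B) m * (C + 1 - A - B + of_nat m)"
        by (simp add: pochhammer_Suc)
      have e4: "g k = - of_nat (n choose k0) * (C + of_nat k) * (C + 1 - A - B + of_nat m) * X"
      proof -
        have kk: "k \<noteq> 0" "k - 1 = k0" using 3 by auto
        have "g k = - of_nat (n choose k0) * pochhammer A k * pochhammer B k
           * pochhammer (C + of_nat k) (Suc m) * pochhammer (C+1-A-B) (Suc m)"
          unfolding g_def using kk sm by simp
        also have "\<dots> = - of_nat (n choose k0) * (C + of_nat k) * (C + 1 - A - B + of_nat m) * X"
          unfolding p1 p2 X_def by (simp add: algebra_simps)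
        finally show ?thesis .
      qed
      have cs: "of_nat (Suc n choose k) = (of_nat (n choose k) + of_nat (n choose k0) :: complex)"
        using 3 by simp
      show ?thesis
        unfolding e1 e2 e3 e4 cs
      proof -
        have kk: "of_nat k = (of_nat k0 + 1 :: complex)" using 3 by simp
        have bc': "of_nat k * of_nat (n choose k) = (of_nat m + 1) * (of_nat (n choose k0) :: complex)"
          using bc 3 by simp
        show "(of_nat (n choose k) + of_nat (n choose k0)) * (C + of_nat k) * (C - A - B) * X -
            (C - A) * (C - B) * (of_nat (n choose k) * X) =
            - of_nat (n choose k) * (A + of_nat k) * (B + of_nat k) * X -
            - of_nat (n choose k0) * (C + of_nat k) * (C + 1 - A - B + of_nat m) * X"
          apply (rule sym) using bc' by (simp add: algebra_simps)
      qed
    qed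
  qed
  have "(\<Sum>k=0..Suc n. t (Suc n) k C - (C-A)*(C-B) * t n k (C+1)) = (\<Sum>k=0..Suc n. g (Suc k) - g k)"
    using trm by (intro sum.cong) auto
  also have "\<dots> = g (Suc (Suc n)) - g 0" by (rule sum_Suc_diff) simp
  also have "\<dots> = 0" by (simp add: g_def)
  finally have "(\<Sum>k=0..Suc n. t (Suc n) k C) - (C-A)*(C-B) * (\<Sum>k=0..Suc n. t n k (C+1)) = 0"
    by (simp only: sum_subtractf sum_distrib_left)
  hence "(\<Sum>k=0..Suc n. t (Suc n) k C) = (C-A)*(C-B) * (\<Sum>k=0..Suc n. t n k (C+1))"
    by (simp only: right_minus_eq)
  also have "\<dots> = pochhammer (C-A) (Suc n) * pochhammer (C-B) (Suc n)"
    unfolding ext IH by (simp add: pochhammer_rec algebra_simps)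
  finally show ?case unfolding t_def .
qed

lemma poch_neg_nat: "pochhammer (- of_nat N :: complex) n = (-1)^n * of_nat (N choose n) * fact n"
proof -
  have "(of_nat N gchoose n :: complex) = (- 1) ^ n * pochhammer (- of_nat N) n / fact n"
    by (rule gbinomial_pochhammer)
  hence h: "fact n * (of_nat N gchoose n) = (-1)^n * pochhammer (- of_nat N :: complex) n"
    by (simp add: field_simps)
  have m1: "(-1::complex)^n * (-1)^n = 1" by (simp flip: power_add)
  have "pochhammer (- of_nat N :: complex) n = ((-1)^n * (-1)^n) * pochhammer (- of_nat N) n"
    by (simp only: m1 mult_1)
  also have "\<dots> = (-1)^n * ((-1)^n * pochhammer (- of_nat N) n)" by (simp only: mult.assoc)
  also have "\<dots> = (-1)^n * (fact n * (of_nat N gchoose n))" by (simp only: h)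
  finally show ?thesis by (simp add: binomial_gbinomial mult_ac)
qed

lemma poch_split: "i \<le> n \<Longrightarrow> pochhammer (z::complex) n = pochhammer z i * pochhammer (z + of_nat i) (n - i)"
  by (rule pochhammer_product)

lemma poch_refl: "pochhammer (c - a - of_nat i :: complex) i = (-1)^i * pochhammer (1 + a - c) i"
  using pochhammer_minus[of "a + of_nat i - c" i] by (simp add: algebra_simps)

lemma poch_nz_mono: "pochhammer (z::complex) n \<noteq> 0 \<Longrightarrow> i \<le> n \<Longrightarrow> pochhammer z i \<noteq> 0"
  by (rule pochhammer_neq_0_mono)

lemma expandE:
  fixes a b c :: complex
  assumes hb: "pochhammer (1+a-b) n \<noteq> 0" and hc: "pochhammer (1+a-c) n \<noteq> 0"
  shows "pochhammer b n * pochhammer c n / (pochhammer (1+a-b) n * pochhammer (1+a-c) n)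
    = (\<Sum>i=0..n. pochhammer (- of_nat n) i * pochhammer (a + of_nat n) i * pochhammer (1+a-b-c) i
        / (fact i * pochhammer (1+a-b) i * pochhammer (1+a-c) i))"
proof -
  define D where "D = pochhammer (1+a-b) n * pochhammer (c-a-of_nat n) n"
  have pc: "pochhammer (c-a-of_nat n) n = (-1)^n * pochhammer (1+a-c) n" by (rule poch_refl)
  have pb: "pochhammer (1 - b - of_nat n) n = (-1)^n * pochhammer b n"
    using pochhammer_minus[of "b + of_nat n - 1" n] by (simp add: algebra_simps)
  have D0: "D \<noteq> 0" unfolding D_def pc using hb hc by simp
  have S: "(\<Sum>i=0..n. of_nat (n choose i) * pochhammer (a + of_nat n) i * pochhammer (1+a-b-c) i
      * pochhammer (1+a-b + of_nat i) (n-i) * pochhammer (c-a-of_nat n) (n-i))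
      = pochhammer (1 - b - of_nat n) n * pochhammer c n"
    using saal_poly[of n "a + of_nat n" "1+a-b-c" "1+a-b"] by (simp add: algebra_simps)
  have T: "pochhammer (- of_nat n) i * pochhammer (a + of_nat n) i * pochhammer (1+a-b-c) i
        / (fact i * pochhammer (1+a-b) i * pochhammer (1+a-c) i)
      = of_nat (n choose i) * pochhammer (a + of_nat n) i * pochhammer (1+a-b-c) i
      * pochhammer (1+a-b + of_nat i) (n-i) * pochhammer (c-a-of_nat n) (n-i) / D"
    if "i \<in> {0..n}" for i
  proof -
    from that have i: "i \<le> n" by simp
    have d1: "pochhammer (1+a-b) n = pochhammer (1+a-b) i * pochhammer (1+a-b + of_nat i) (n-i)"
      using poch_split[OF i] .
    have d2: "pochhammer (c-a-of_nat n) n = pochhammer (c-a-of_nat n) (n-i) * ((-1)^i * pochhammer (1+a-c) i)"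
    proof -
      have "pochhammer (c-a-of_nat n) n = pochhammer (c-a-of_nat n) (n-i) * pochhammer (c-a-of_nat n + of_nat (n-i)) i"
        using pochhammer_product'[of "c-a-of_nat n" "n-i" i] i by simp
      also have "c-a-of_nat n + of_nat (n-i) = c - a - of_nat i" using i by (simp add: of_nat_diff)
      finally show ?thesis using poch_refl[of c a i] by simp
    qed
    have nz1: "pochhammer (1+a-b) i \<noteq> 0" using poch_nz_mono[OF hb i] .
    have nz2: "pochhammer (1+a-c) i \<noteq> 0" using poch_nz_mono[OF hc i] .
    have nz3: "pochhammer (1+a-b + of_nat i) (n-i) \<noteq> 0" using hb d1 by auto
    have nz4: "pochhammer (c-a-of_nat n) (n-i) \<noteq> 0" using hc d2 pc by auto
    have Dd: "D = pochhammer (1+a-b) i * pochhammer (1+a-b + of_nat i) (n-i) * (pochhammer (c-a-of_nat n) (n-i) * ((-1)^i * pochhammer (1+a-c) i))"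
      unfolding D_def d1 d2 ..
    show ?thesis unfolding Dd poch_neg_nat using nz1 nz2 nz3 nz4
      by (simp add: field_simps)
  qed
  have "(\<Sum>i=0..n. pochhammer (- of_nat n) i * pochhammer (a + of_nat n) i * pochhammer (1+a-b-c) i
        / (fact i * pochhammer (1+a-b) i * pochhammer (1+a-c) i))
     = (\<Sum>i=0..n. of_nat (n choose i) * pochhammer (a + of_nat n) i * pochhammer (1+a-b-c) i
      * pochhammer (1+a-b + of_nat i) (n-i) * pochhammer (c-a-of_nat n) (n-i)) / D"
    using T by (simp add: sum_divide_distrib)
  also have "\<dots> = pochhammer (1 - b - of_nat n) n * pochhammer c n / D" unfolding S ..
  also have "\<dots> = pochhammer b n * pochhammer c n / (pochhammer (1+a-b) n * pochhammer (1+a-c) n)"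
    unfolding D_def pc pb using hb hc by (simp add: field_simps)
  finally show ?thesis by simp
qed

definition T3 :: "complex \<Rightarrow> nat \<Rightarrow> nat \<Rightarrow> complex" where
  "T3 a N n = pochhammer a n * pochhammer (1 + a/2) n * pochhammer (- of_nat N) n /
     (fact n * pochhammer (a/2) n * pochhammer (1 + a + of_nat N) n)"

lemma half_ratio:
  assumes "a \<noteq> (0::complex)" "pochhammer (a/2) n \<noteq> 0"
  shows "pochhammer (1 + a/2) n / pochhammer (a/2) n = (a + 2 * of_nat n) / a"
proof -
  have "pochhammer (a/2) (Suc n) = a/2 * pochhammer (1 + a/2) n" by (simp add: pochhammer_rec add.commute)
  moreover have "pochhammer (a/2) (Suc n) = pochhammer (a/2) n * (a/2 + of_nat n)" by (simp add: pochhammer_Suc)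
  ultimately have "a/2 * pochhammer (1 + a/2) n = pochhammer (a/2) n * (a/2 + of_nat n)" by simp
  thus ?thesis using assms by (simp add: field_simps)
qed

lemma a_nz: "pochhammer (a/2) N \<noteq> (0::complex) \<Longrightarrow> N > 0 \<Longrightarrow> a \<noteq> 0"
  by (auto simp: pochhammer_eq_0_iff)

lemma poch_zero_nat: "N < j \<Longrightarrow> n \<le> N \<Longrightarrow> pochhammer (of_nat n - of_nat N :: complex) j = 0"
proof -
  assume "N < j" "n \<le> N"
  hence "of_nat n - of_nat N = - (of_nat (N - n) :: complex)" by (simp add: of_nat_diff)
  moreover have "pochhammer (- (of_nat (N - n) :: complex)) j = 0"
    using \<open>N<j\<close> by (intro pochhammer_of_nat_eq_0_lemma) simp
  ultimately show ?thesis by simp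
qed

lemma F3:
  fixes a :: complex
  assumes hA: "pochhammer (a/2) N \<noteq> 0" and hB: "pochhammer (1 + a + of_nat N) N \<noteq> 0"
  shows "(\<Sum>n=0..N. T3 a N n * pochhammer (of_nat n - of_nat N) j * pochhammer (- a - of_nat N - of_nat n) j)
     = (if j = N then fact N * pochhammer (1 + a) N else 0)"
proof (cases "N < j")
  case True
  thus ?thesis using poch_zero_nat[OF True] by simp
next
  case False
  hence jN: "j \<le> N" by simp
  show ?thesis
  proof (cases "N = 0")
    case True
    thus ?thesis using jN by (simp add: T3_def)
  next
    case False
    hence a0: "a \<noteq> 0" using a_nz[OF hA] by simp
    define M where "M = N - j"
    have MN: "of_nat M = (of_nat N - of_nat j :: complex)" using jN by (simp add: M_def of_nat_diff)
    define u where "u = (\<lambda>n. (a + 2 * of_nat n) / a * pochhammer a n * pochhammer (- of_nat M) n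
        * pochhammer (1 + a + of_nat M + of_nat n) j / (fact n * pochhammer (1 + a + of_nat N) n))"
    define V where "V = (\<lambda>n. pochhammer (a + 1) n * pochhammer (1 - of_nat M) n
        * pochhammer (1 + a + of_nat M + of_nat n) j / (fact n * pochhammer (1 + a + of_nat N) n))"
    have step1: "T3 a N n * pochhammer (of_nat n - of_nat N) j * pochhammer (- a - of_nat N - of_nat n) j
        = (-1)^j * pochhammer (- of_nat N) j * u n" if "n \<le> N" for n
    proof -
      have nz1: "pochhammer (a/2) n \<noteq> 0" using poch_nz_mono[OF hA that] .
      have nz2: "pochhammer (1 + a + of_nat N) n \<noteq> 0" using poch_nz_mono[OF hB that] .
      have pa: "pochhammer (- of_nat N :: complex) n * pochhammer (of_nat n - of_nat N) j
          = pochhammer (- of_nat N) j * pochhammer (- of_nat M) n"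
      proof -
        have "pochhammer (- of_nat N :: complex) (n + j) = pochhammer (- of_nat N) n * pochhammer (of_nat n - of_nat N) j"
          using pochhammer_product'[of "- of_nat N :: complex" n j] by (simp add: algebra_simps)
        moreover have "pochhammer (- of_nat N :: complex) (j + n) = pochhammer (- of_nat N) j * pochhammer (- of_nat M) n"
        proof -
          have e: "(- of_nat N + of_nat j :: complex) = - of_nat M" using MN by simp
          show ?thesis using pochhammer_product'[of "- of_nat N :: complex" j n] unfolding e .
        qed
        ultimately show ?thesis by (simp add: add.commute)
      qed
      have pb: "pochhammer (- a - of_nat N - of_nat n) j = (-1)^j * pochhammer (1 + a + of_nat M + of_nat n) j"
      proof -
        have e: "a + of_nat N + of_nat n - of_nat j + 1 = 1 + a + of_nat M + of_nat n" using MN by simp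
        have e2: "- (a + of_nat N + of_nat n) = - a - of_nat N - of_nat n" by simp
        show ?thesis using pochhammer_minus[of "a + of_nat N + of_nat n" j] unfolding e e2 .
      qed
      have pc: "pochhammer (1 + a/2) n / pochhammer (a/2) n = (a + 2 * of_nat n) / a"
        using half_ratio[OF a0 nz1] .
      have "T3 a N n * pochhammer (of_nat n - of_nat N) j * pochhammer (- a - of_nat N - of_nat n) j
        = pochhammer a n * (pochhammer (1 + a/2) n / pochhammer (a/2) n)
          * (pochhammer (- of_nat N) n * pochhammer (of_nat n - of_nat N) j)
          * pochhammer (- a - of_nat N - of_nat n) j / (fact n * pochhammer (1 + a + of_nat N) n)"
        unfolding T3_def using nz1 nz2 by (simp add: field_simps)
      also have "\<dots> = (-1)^j * pochhammer (- of_nat N) j * u n"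
        unfolding pa pb pc u_def using nz2 a0 by (simp add: field_simps)
      finally show ?thesis .
    qed
    have step2: "u (Suc n) = V (Suc n) - V n" if "Suc n \<le> N" for n
    proof -
      have nz2: "pochhammer (1 + a + of_nat N) (Suc n) \<noteq> 0" using poch_nz_mono[OF hB that] .
      have nz3: "pochhammer (1 + a + of_nat N) n \<noteq> 0" using poch_nz_mono[OF hB] that by simp
      have q1: "pochhammer (1 + a + of_nat N) (Suc n) = pochhammer (1 + a + of_nat N) n * (1 + a + of_nat N + of_nat n)"
        by (simp add: pochhammer_Suc)
      have nz4: "1 + a + of_nat N + of_nat n \<noteq> 0" using nz2 nz3 q1 by auto
      have key: "pochhammer (1 + a + of_nat M + of_nat n) j * (1 + a + of_nat N + of_nat n)
          = pochhammer (1 + a + of_nat M + of_nat (Suc n)) j * (1 + a + of_nat M + of_nat n)"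
      proof -
        have e1: "1 + a + of_nat M + of_nat n + of_nat j = 1 + a + of_nat N + of_nat n" using MN by simp
        have e2: "1 + a + of_nat M + of_nat n + 1 = 1 + a + of_nat M + of_nat (Suc n)" by simp
        have A1: "pochhammer (1 + a + of_nat M + of_nat n) (Suc j) = pochhammer (1 + a + of_nat M + of_nat n) j * (1 + a + of_nat N + of_nat n)"
          using pochhammer_Suc[of "1 + a + of_nat M + of_nat n" j] unfolding e1 .
        have A2: "pochhammer (1 + a + of_nat M + of_nat n) (Suc j) = (1 + a + of_nat M + of_nat n) * pochhammer (1 + a + of_nat M + of_nat (Suc n)) j"
          using pochhammer_rec[of "1 + a + of_nat M + of_nat n" j] unfolding e2 .
        show ?thesis using A1 A2 by (simp add: mult.commute)
      qed
      have r1: "pochhammer a (Suc n) = a * pochhammer (a + 1) n" by (simp add: pochhammer_rec)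
      have r2: "pochhammer (- of_nat M :: complex) (Suc n) = (- of_nat M) * pochhammer (1 - of_nat M) n"
        by (simp add: pochhammer_rec algebra_simps)
      have r3: "pochhammer (a + 1) (Suc n) = pochhammer (a + 1) n * (a + 1 + of_nat n)" by (simp add: pochhammer_Suc)
      have r4: "pochhammer (1 - of_nat M :: complex) (Suc n) = pochhammer (1 - of_nat M) n * (1 - of_nat M + of_nat n)"
        by (simp add: pochhammer_Suc)
      define Z where "Z = pochhammer (1 + a + of_nat M + of_nat (Suc n)) j"
      have key': "pochhammer (1 + a + of_nat M + of_nat n) j = Z * (1 + a + of_nat M + of_nat n) / (1 + a + of_nat N + of_nat n)"
        using key nz4 unfolding Z_def by (simp add: field_simps)
      define E where "E = fact n * pochhammer (1 + a + of_nat N) n * (1 + a + of_nat N + of_nat n)"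
      define D where "D = fact (Suc n) * (pochhammer (1 + a + of_nat N) n * (1 + a + of_nat N + of_nat n))"
      have E0: "E \<noteq> 0" unfolding E_def using nz3 nz4 by simp
      have Dd: "D = (of_nat n + 1) * E" unfolding D_def E_def by (simp add: algebra_simps)
      have n1: "(1 + of_nat n :: complex) \<noteq> 0" "(of_nat n + 1 :: complex) \<noteq> 0"
        by (metis of_nat_Suc of_nat_eq_0_iff nat.distinct(1) add.commute)+
      have D0: "D \<noteq> 0" unfolding Dd using E0 n1 by simp
      define W where "W = Z / D"
      define X where "X = pochhammer (a + 1) n * pochhammer (1 - of_nat M) n"
      have U: "u (Suc n) = - of_nat M * (a + 2 * of_nat n + 2) * X * W"
      proof -
        have "u (Suc n) = (a + 2 * of_nat (Suc n)) / a * (a * pochhammer (a + 1) n) * ((- of_nat M) * pochhammer (1 - of_nat M) n)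
          * Z / D"
          unfolding u_def r1 r2 q1 Z_def D_def ..
        also have "\<dots> = - of_nat M * (a + 2 * of_nat n + 2) * X * W"
          unfolding W_def X_def using a0 D0 by (simp add: field_simps)
        finally show ?thesis .
      qed
      have V1: "V (Suc n) = (a + 1 + of_nat n) * (1 - of_nat M + of_nat n) * X * W"
      proof -
        have "V (Suc n) = (pochhammer (a + 1) n * (a + 1 + of_nat n)) * (pochhammer (1 - of_nat M) n * (1 - of_nat M + of_nat n))
          * Z / D"
          unfolding V_def r3 r4 q1 Z_def D_def ..
        also have "\<dots> = (a + 1 + of_nat n) * (1 - of_nat M + of_nat n) * X * W"
          unfolding W_def X_def using D0 by (simp add: field_simps)
        finally show ?thesis .
      qed
      have V0: "V n = (of_nat n + 1) * (1 + a + of_nat M + of_nat n) * X * W"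
      proof -
        have "V n = pochhammer (a + 1) n * pochhammer (1 - of_nat M) n
          * (Z * (1 + a + of_nat M + of_nat n) / (1 + a + of_nat N + of_nat n)) / (fact n * pochhammer (1 + a + of_nat N) n)"
          unfolding V_def key' ..
        also have "\<dots> = X * Z * (1 + a + of_nat M + of_nat n) / E"
          unfolding X_def E_def using nz3 nz4 by (simp add: field_simps)
        also have "\<dots> = (of_nat n + 1) * ((1 + a + of_nat M + of_nat n) * X * Z) / ((of_nat n + 1) * E)"
          using mult_divide_mult_cancel_left[OF n1(2), of "(1 + a + of_nat M + of_nat n) * X * Z" E]
          by (simp add: mult_ac)
        also have "\<dots> = (of_nat n + 1) * (1 + a + of_nat M + of_nat n) * X * Z / D"
          unfolding Dd by (simp only: mult.assoc)
        also have "\<dots> = (of_nat n + 1) * (1 + a + of_nat M + of_nat n) * X * W"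
          unfolding W_def by simp
        finally show ?thesis .
      qed
      show ?thesis unfolding U V1 V0 by (simp add: algebra_simps)
    qed
    have u0: "u 0 = V 0" using a0 by (simp add: u_def V_def)
    have step3: "(\<Sum>n=0..m. u n) = V m" if "m \<le> N" for m
      using that
    proof (induction m)
      case 0 then show ?case using u0 by simp
    next
      case (Suc m)
      then show ?case using step2[OF Suc.prems] by simp
    qed
    have step4: "V N = (if j = N then pochhammer (a + 1) N else 0)"
    proof (cases "j = N")
      case True
      hence "M = 0" by (simp add: M_def)
      thus ?thesis using True hB by (simp add: V_def pochhammer_fact[symmetric] algebra_simps)
    next
      case False
      hence M1: "M \<ge> 1" using jN by (simp add: M_def)
      have "pochhammer (1 - of_nat M :: complex) N = 0"
      proof -
        have "(1 - of_nat M :: complex) = - of_nat (M - 1)" using M1 by (simp add: of_nat_diff)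
        moreover have "M - 1 < N" using M1 by (simp add: M_def)
        ultimately show ?thesis by (simp add: pochhammer_of_nat_eq_0_lemma)
      qed
      thus ?thesis using False by (simp add: V_def)
    qed
    have "(\<Sum>n=0..N. T3 a N n * pochhammer (of_nat n - of_nat N) j * pochhammer (- a - of_nat N - of_nat n) j)
        = (\<Sum>n=0..N. (-1)^j * pochhammer (- of_nat N) j * u n)"
      using step1 by (intro sum.cong) auto
    also have "\<dots> = (-1)^j * pochhammer (- of_nat N) j * V N"
      using step3[of N] by (simp add: sum_distrib_left[symmetric])
    also have "\<dots> = (if j = N then fact N * pochhammer (1 + a) N else 0)"
      using step4 by (simp add: pochhammer_same add.commute) 
    finally show ?thesis .
  qed
qed

definition K3 :: "complex \<Rightarrow> nat \<Rightarrow> nat \<Rightarrow> complex" where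
  "K3 a N i = (-1)^i * pochhammer a (2*i) * (pochhammer (1 + a/2) i / pochhammer (a/2) i)
     * pochhammer (- of_nat N) i / pochhammer (1 + a + of_nat N) i"

lemma fact_split: "fact (i + m) = (fact m :: complex) * pochhammer (of_nat m + 1) i"
proof -
  have "fact (m + i) = (pochhammer 1 (m + i) :: complex)" by (simp add: pochhammer_fact)
  also have "\<dots> = pochhammer 1 m * pochhammer (1 + of_nat m) i" by (rule pochhammer_product')
  finally show ?thesis by (simp add: pochhammer_fact add.commute)
qed

lemma poch_pos_nz: "pochhammer (of_nat m + 1 :: complex) i \<noteq> 0"
  by (auto simp: pochhammer_eq_0_iff) (metis of_nat_add of_nat_1 of_nat_eq_0_iff add_eq_0_iff_both_eq_0 one_neq_zero neg_eq_iff_add_eq_0 of_nat_0 add.commute add.left_commute)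

lemma T3_shift:
  fixes a :: complex
  assumes hA: "pochhammer (a/2) N \<noteq> 0" and hB: "pochhammer (1 + a + of_nat N) N \<noteq> 0"
    and im: "i + m \<le> N"
  shows "T3 a N (i+m) * pochhammer (- of_nat (i+m)) i * pochhammer (a + of_nat (i+m)) i
     = K3 a N i * T3 (a + 2 * of_nat i) (N - i) m"
proof -
  have iN: "i \<le> N" using im by simp
  have p1: "pochhammer a (i+m) * pochhammer (a + of_nat (i+m)) i = pochhammer a (2*i) * pochhammer (a + 2 * of_nat i) m"
  proof -
    have "pochhammer a (i+m) * pochhammer (a + of_nat (i+m)) i = pochhammer a ((i+m)+i)"
      by (rule pochhammer_product'[symmetric])
    also have "(i+m)+i = 2*i + m" by simp
    also have "pochhammer a (2*i + m) = pochhammer a (2*i) * pochhammer (a + 2 * of_nat i) m"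
      by (simp add: pochhammer_product')
    finally show ?thesis .
  qed
  have p2: "pochhammer (1 + a/2) (i+m) = pochhammer (1 + a/2) i * pochhammer (1 + (a + 2 * of_nat i)/2) m"
    by (simp add: pochhammer_product' add_divide_distrib algebra_simps)
  have p3: "pochhammer (a/2) (i+m) = pochhammer (a/2) i * pochhammer ((a + 2 * of_nat i)/2) m"
    by (simp add: pochhammer_product' add_divide_distrib algebra_simps)
  have p4: "pochhammer (- of_nat N :: complex) (i+m) = pochhammer (- of_nat N) i * pochhammer (- of_nat (N - i)) m"
    using iN by (simp add: pochhammer_product' of_nat_diff algebra_simps)
  have p5: "pochhammer (1 + a + of_nat N) (i+m) = pochhammer (1 + a + of_nat N) i * pochhammer (1 + (a + 2 * of_nat i) + of_nat (N - i)) m"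
    using iN by (simp add: pochhammer_product' of_nat_diff algebra_simps)
  have p6: "pochhammer (- of_nat (i+m) :: complex) i = (-1)^i * pochhammer (of_nat m + 1) i"
    using pochhammer_minus[of "of_nat (i+m) :: complex" i] by (simp add: algebra_simps)
  have nzA: "pochhammer (a/2) (i+m) \<noteq> 0" using poch_nz_mono[OF hA im] .
  have nzB: "pochhammer (1 + a + of_nat N) (i+m) \<noteq> 0" using poch_nz_mono[OF hB im] .
  have nz1: "pochhammer (a/2) i \<noteq> 0" "pochhammer ((a + 2 * of_nat i)/2) m \<noteq> 0" using nzA unfolding p3 by auto
  have nz2: "pochhammer (1 + a + of_nat N) i \<noteq> 0" "pochhammer (1 + (a + 2 * of_nat i) + of_nat (N - i)) m \<noteq> 0"
    using nzB unfolding p5 by auto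
  have nz3: "pochhammer (of_nat m + 1 :: complex) i \<noteq> 0" by (rule poch_pos_nz)
  have "T3 a N (i+m) * pochhammer (- of_nat (i+m)) i * pochhammer (a + of_nat (i+m)) i
     = (pochhammer a (i+m) * pochhammer (a + of_nat (i+m)) i) * pochhammer (1 + a/2) (i+m) * pochhammer (- of_nat N) (i+m)
        * pochhammer (- of_nat (i+m)) i
       / (fact (i+m) * pochhammer (a/2) (i+m) * pochhammer (1 + a + of_nat N) (i+m))"
    unfolding T3_def by (simp add: field_simps)
  also have "\<dots> = (pochhammer a (2*i) * pochhammer (a + 2 * of_nat i) m)
        * (pochhammer (1 + a/2) i * pochhammer (1 + (a + 2 * of_nat i)/2) m)
        * (pochhammer (- of_nat N) i * pochhammer (- of_nat (N - i)) m)
        * ((-1)^i * pochhammer (of_nat m + 1) i)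
       / ((fact m * pochhammer (of_nat m + 1) i) * (pochhammer (a/2) i * pochhammer ((a + 2 * of_nat i)/2) m)
          * (pochhammer (1 + a + of_nat N) i * pochhammer (1 + (a + 2 * of_nat i) + of_nat (N - i)) m))"
    unfolding p1 p2 p3 p4 p5 p6 fact_split ..
  also have "\<dots> = K3 a N i * T3 (a + 2 * of_nat i) (N - i) m"
    unfolding K3_def T3_def using nz1 nz2 nz3 by (simp add: field_simps)
  finally show ?thesis .
qed

lemma K3_val:
  fixes a :: complex
  assumes hA: "pochhammer (a/2) N \<noteq> 0" and hB: "pochhammer (1 + a + of_nat N) N \<noteq> 0" and iN: "i \<le> N"
  shows "K3 a N i * (fact (N - i) * pochhammer (1 + (a + 2 * of_nat i)) (N - i)) = fact N * pochhammer (1 + a) N"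
proof (cases "i = 0")
  case True
  thus ?thesis by (simp add: K3_def)
next
  case False
  hence N0: "N > 0" using iN by simp
  have a0: "a \<noteq> 0" using a_nz[OF hA N0] .
  have nzA: "pochhammer (a/2) i \<noteq> 0" using poch_nz_mono[OF hA iN] .
  have nzB: "pochhammer (1 + a + of_nat N) i \<noteq> 0" using poch_nz_mono[OF hB iN] .
  have r: "pochhammer (1 + a/2) i / pochhammer (a/2) i = (a + 2 * of_nat i) / a" using half_ratio[OF a0 nzA] .
  have q: "pochhammer a (2*i) * (a + 2 * of_nat i) * pochhammer (1 + (a + 2 * of_nat i)) (N - i)
      = a * (pochhammer (1 + a) N * pochhammer (1 + a + of_nat N) i)"
  proof -
    have "pochhammer a (2*i) * (a + 2 * of_nat i) * pochhammer (1 + (a + 2 * of_nat i)) (N - i)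
       = pochhammer a (2*i) * pochhammer (a + of_nat (2*i)) (Suc (N - i))"
      by (simp add: pochhammer_rec algebra_simps)
    also have "\<dots> = pochhammer a (2*i + Suc (N - i))" by (rule pochhammer_product'[symmetric])
    also have "2*i + Suc (N - i) = Suc (N + i)" using iN by simp
    also have "pochhammer a (Suc (N + i)) = a * pochhammer (1 + a) (N + i)" by (simp add: pochhammer_rec add.commute)
    also have "pochhammer (1 + a) (N + i) = pochhammer (1 + a) N * pochhammer (1 + a + of_nat N) i"
      by (rule pochhammer_product')
    finally show ?thesis .
  qed
  have b: "(-1)^i * pochhammer (- of_nat N :: complex) i * fact (N - i) = fact N"
  proof -
    have "(-1)^i * pochhammer (- of_nat N :: complex) i = ((-1)^i * (-1)^i) * of_nat (N choose i) * fact i"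
      unfolding poch_neg_nat by (simp add: mult_ac)
    also have "(-1::complex)^i * (-1)^i = 1" by (simp flip: power_add)
    finally have "(-1)^i * pochhammer (- of_nat N :: complex) i * fact (N - i) = of_nat (fact i * fact (N - i) * (N choose i))"
      by (simp add: mult_ac)
    also have "\<dots> = fact N" using binomial_fact_lemma[OF iN] by (metis of_nat_fact)
    finally show ?thesis .
  qed
  have "K3 a N i * (fact (N - i) * pochhammer (1 + (a + 2 * of_nat i)) (N - i))
     = ((-1)^i * pochhammer (- of_nat N) i * fact (N - i)) * (pochhammer a (2*i) * (a + 2 * of_nat i) * pochhammer (1 + (a + 2 * of_nat i)) (N - i))
       / (a * pochhammer (1 + a + of_nat N) i)"
    unfolding K3_def r using a0 nzB by (simp add: field_simps)
  also have "\<dots> = fact N * pochhammer (1 + a) N" unfolding b q using a0 nzB by (simp add: field_simps)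
  finally show ?thesis .
qed

lemma hyps_shift:
  fixes a :: complex
  assumes hA: "pochhammer (a/2) N \<noteq> 0" and hB: "pochhammer (1 + a + of_nat N) N \<noteq> 0" and iN: "i \<le> N"
  shows "pochhammer ((a + 2 * of_nat i)/2) (N - i) \<noteq> 0"
    "pochhammer (1 + (a + 2 * of_nat i) + of_nat (N - i)) (N - i) \<noteq> 0"
proof -
  have s1: "pochhammer (a/2) N = pochhammer (a/2) i * pochhammer (a/2 + of_nat i) (N - i)"
    using poch_split[OF iN] .
  have e1: "(a + 2 * of_nat i)/2 = a/2 + of_nat i" by (simp add: add_divide_distrib)
  show "pochhammer ((a + 2 * of_nat i)/2) (N - i) \<noteq> 0" unfolding e1 using hA s1 by auto
  have s2: "pochhammer (1 + a + of_nat N) N = pochhammer (1 + a + of_nat N) i * pochhammer (1 + a + of_nat N + of_nat i) (N - i)"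
    using poch_split[OF iN] .
  have e2: "1 + (a + 2 * of_nat i) + of_nat (N - i) = 1 + a + of_nat N + of_nat i" using iN by (simp add: of_nat_diff)
  show "pochhammer (1 + (a + 2 * of_nat i) + of_nat (N - i)) (N - i) \<noteq> 0" unfolding e2 using hB s2 by auto
qed

lemma sum_shift_zero:
  fixes f :: "nat \<Rightarrow> complex"
  assumes "i \<le> N" "\<And>n. n < i \<Longrightarrow> f n = 0"
  shows "(\<Sum>n=0..N. f n) = (\<Sum>m=0..N-i. f (i + m))"
proof -
  have "(\<Sum>n=0..N. f n) = (\<Sum>n=i..N. f n)"
    using assms by (intro sum.mono_neutral_right) auto
  also have "\<dots> = (\<Sum>m=0..N-i. f (m + i))"
    using sum.shift_bounds_cl_nat_ivl[of f 0 i "N - i"] assms(1) by simp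
  finally show ?thesis by (simp add: add.commute)
qed

lemma G3:
  fixes a :: complex
  assumes hA: "pochhammer (a/2) N \<noteq> 0" and hB: "pochhammer (1 + a + of_nat N) N \<noteq> 0"
  shows "(\<Sum>n=0..N. T3 a N n * pochhammer (- of_nat n) i * pochhammer (a + of_nat n) i
      * pochhammer (of_nat n - of_nat N) j * pochhammer (- a - of_nat N - of_nat n) j)
     = (if i + j = N then fact N * pochhammer (1 + a) N else 0)"
proof (cases "N < i")
  case True
  have "pochhammer (- of_nat n :: complex) i = 0" if "n \<le> N" for n
    using that True by (intro pochhammer_of_nat_eq_0_lemma) simp
  thus ?thesis using True by simp
next
  case False
  hence iN: "i \<le> N" by simp
  define f where "f = (\<lambda>n. T3 a N n * pochhammer (- of_nat n) i * pochhammer (a + of_nat n) i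
      * pochhammer (of_nat n - of_nat N) j * pochhammer (- a - of_nat N - of_nat n) j)"
  have fz: "f n = 0" if "n < i" for n
  proof -
    have "pochhammer (- of_nat n :: complex) i = 0" using that by (intro pochhammer_of_nat_eq_0_lemma)
    thus ?thesis by (simp add: f_def)
  qed
  have fm: "f (i + m) = K3 a N i * (T3 (a + 2 * of_nat i) (N - i) m
      * pochhammer (of_nat m - of_nat (N - i)) j * pochhammer (- (a + 2 * of_nat i) - of_nat (N - i) - of_nat m) j)"
    if "m \<in> {0..N-i}" for m
  proof -
    have im: "i + m \<le> N" using that iN by auto
    have e1: "(of_nat (i + m) - of_nat N :: complex) = of_nat m - of_nat (N - i)" using iN by (simp add: of_nat_diff)
    have e2: "(- a - of_nat N - of_nat (i + m) :: complex) = - (a + 2 * of_nat i) - of_nat (N - i) - of_nat m"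
      using iN by (simp add: of_nat_diff algebra_simps)
    have "f (i + m) = (T3 a N (i+m) * pochhammer (- of_nat (i+m)) i * pochhammer (a + of_nat (i+m)) i)
      * pochhammer (of_nat (i + m) - of_nat N) j * pochhammer (- a - of_nat N - of_nat (i + m)) j"
      by (simp add: f_def)
    also have "\<dots> = K3 a N i * T3 (a + 2 * of_nat i) (N - i) m
      * pochhammer (of_nat m - of_nat (N - i)) j * pochhammer (- (a + 2 * of_nat i) - of_nat (N - i) - of_nat m) j"
      unfolding T3_shift[OF hA hB im] e1 e2 ..
    finally show ?thesis by (simp add: mult_ac)
  qed
  have "(\<Sum>n=0..N. f n) = (\<Sum>m=0..N-i. f (i + m))" by (rule sum_shift_zero[OF iN fz])
  also have "\<dots> = K3 a N i * (\<Sum>m=0..N-i. T3 (a + 2 * of_nat i) (N - i) m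
      * pochhammer (of_nat m - of_nat (N - i)) j * pochhammer (- (a + 2 * of_nat i) - of_nat (N - i) - of_nat m) j)"
    using fm by (simp add: sum_distrib_left)
  also have "\<dots> = K3 a N i * (if j = N - i then fact (N - i) * pochhammer (1 + (a + 2 * of_nat i)) (N - i) else 0)"
    using F3[OF hyps_shift[OF hA hB iN], of j] by simp
  also have "\<dots> = (if i + j = N then fact N * pochhammer (1 + a) N else 0)"
    using K3_val[OF hA hB iN] iN by auto
  finally show ?thesis unfolding f_def .
qed

definition R2 :: "complex \<Rightarrow> complex \<Rightarrow> complex \<Rightarrow> nat \<Rightarrow> complex" where
  "R2 a d e n = pochhammer d n * pochhammer e n / (pochhammer (1+a-d) n * pochhammer (1+a-e) n)"

definition ecoef :: "complex \<Rightarrow> complex \<Rightarrow> complex \<Rightarrow> nat \<Rightarrow> complex" where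
  "ecoef a d e i = pochhammer (1+a-d-e) i / (fact i * pochhammer (1+a-d) i * pochhammer (1+a-e) i)"

lemma R2_expand:
  assumes hd: "pochhammer (1+a-d) N \<noteq> 0" and he: "pochhammer (1+a-e) N \<noteq> 0" and nN: "n \<le> N"
  shows "R2 a d e n = (\<Sum>i=0..N. pochhammer (- of_nat n) i * pochhammer (a + of_nat n) i * ecoef a d e i)"
proof -
  have "R2 a d e n = (\<Sum>i=0..n. pochhammer (- of_nat n) i * pochhammer (a + of_nat n) i * ecoef a d e i)"
    unfolding R2_def ecoef_def
    using expandE[OF poch_nz_mono[OF hd nN] poch_nz_mono[OF he nN]] by (simp add: field_simps)
  also have "\<dots> = (\<Sum>i=0..N. pochhammer (- of_nat n) i * pochhammer (a + of_nat n) i * ecoef a d e i)"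
  proof (rule sum.mono_neutral_left)
    show "\<forall>i\<in>{0..N} - {0..n}. pochhammer (- of_nat n) i * pochhammer (a + of_nat n) i * ecoef a d e i = 0"
      by (auto simp: pochhammer_of_nat_eq_0_lemma)
  qed (use nN in auto)
  finally show ?thesis .
qed

lemma L4gen:
  fixes a d e :: complex and w :: "nat \<Rightarrow> complex"
  assumes hA: "pochhammer (a/2) N \<noteq> 0" and hB: "pochhammer (1 + a + of_nat N) N \<noteq> 0"
    and hd: "pochhammer (1+a-d) N \<noteq> 0" and he: "pochhammer (1+a-e) N \<noteq> 0"
  shows "(\<Sum>n=0..N. T3 a N n * R2 a d e n *
      (\<Sum>j=0..k. pochhammer (of_nat n - of_nat N) j * pochhammer (- a - of_nat N - of_nat n) j * w j))
   = fact N * pochhammer (1+a) N * (\<Sum>j=0..k. if j \<le> N then ecoef a d e (N - j) * w j else 0)"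
proof -
  define G where "G = (\<lambda>i j. (\<Sum>n=0..N. T3 a N n * pochhammer (- of_nat n) i * pochhammer (a + of_nat n) i
      * pochhammer (of_nat n - of_nat N) j * pochhammer (- a - of_nat N - of_nat n) j))"
  have "(\<Sum>n=0..N. T3 a N n * R2 a d e n *
      (\<Sum>j=0..k. pochhammer (of_nat n - of_nat N) j * pochhammer (- a - of_nat N - of_nat n) j * w j))
    = (\<Sum>n=0..N. \<Sum>i=0..N. \<Sum>j=0..k. (ecoef a d e i * w j) * (T3 a N n * pochhammer (- of_nat n) i * pochhammer (a + of_nat n) i
      * pochhammer (of_nat n - of_nat N) j * pochhammer (- a - of_nat N - of_nat n) j))"
  proof (rule sum.cong[OF refl])
    fix n assume "n \<in> {0..N}"
    hence nN: "n \<le> N" by simp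
    show "T3 a N n * R2 a d e n *
      (\<Sum>j=0..k. pochhammer (of_nat n - of_nat N) j * pochhammer (- a - of_nat N - of_nat n) j * w j)
      = (\<Sum>i=0..N. \<Sum>j=0..k. (ecoef a d e i * w j) * (T3 a N n * pochhammer (- of_nat n) i * pochhammer (a + of_nat n) i
      * pochhammer (of_nat n - of_nat N) j * pochhammer (- a - of_nat N - of_nat n) j))"
    proof -
      let ?A = "\<lambda>i. pochhammer (- of_nat n) i * pochhammer (a + of_nat n) i * ecoef a d e i"
      let ?B = "\<lambda>j. pochhammer (of_nat n - of_nat N) j * pochhammer (- a - of_nat N - of_nat n) j * w j"
      have "T3 a N n * R2 a d e n * sum ?B {0..k} = T3 a N n * (sum ?A {0..N} * sum ?B {0..k})"
        unfolding R2_expand[OF hd he nN] by (simp only: mult.assoc)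
      also have "sum ?A {0..N} * sum ?B {0..k} = (\<Sum>i=0..N. \<Sum>j=0..k. ?A i * ?B j)" by (rule sum_product)
      also have "T3 a N n * \<dots> = (\<Sum>i=0..N. \<Sum>j=0..k. T3 a N n * (?A i * ?B j))" by (simp add: sum_distrib_left)
      finally show ?thesis by (simp add: mult_ac)
    qed
  qed
  also have "\<dots> = (\<Sum>i=0..N. \<Sum>n=0..N. \<Sum>j=0..k. (ecoef a d e i * w j) * (T3 a N n * pochhammer (- of_nat n) i * pochhammer (a + of_nat n) i
      * pochhammer (of_nat n - of_nat N) j * pochhammer (- a - of_nat N - of_nat n) j))"
    by (rule sum.swap)
  also have "\<dots> = (\<Sum>i=0..N. \<Sum>j=0..k. \<Sum>n=0..N. (ecoef a d e i * w j) * (T3 a N n * pochhammer (- of_nat n) i * pochhammer (a + of_nat n) i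
      * pochhammer (of_nat n - of_nat N) j * pochhammer (- a - of_nat N - of_nat n) j))"
    by (intro sum.cong refl sum.swap)
  also have "\<dots> = (\<Sum>i=0..N. \<Sum>j=0..k. (ecoef a d e i * w j) * G i j)"
    unfolding G_def by (simp add: sum_distrib_left)
  also have "\<dots> = (\<Sum>i=0..N. \<Sum>j=0..k. (ecoef a d e i * w j) * (if i + j = N then fact N * pochhammer (1 + a) N else 0))"
    unfolding G_def using G3[OF hA hB] by simp
  also have "\<dots> = (\<Sum>j=0..k. \<Sum>i=0..N. (ecoef a d e i * w j) * (if i + j = N then fact N * pochhammer (1 + a) N else 0))"
    by (rule sum.swap)
  also have "\<dots> = (\<Sum>j=0..k. fact N * pochhammer (1 + a) N * (if j \<le> N then ecoef a d e (N - j) * w j else 0))"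
  proof (rule sum.cong[OF refl])
    fix j
    have "(\<Sum>i=0..N. (ecoef a d e i * w j) * (if i + j = N then fact N * pochhammer (1 + a) N else 0))
      = (\<Sum>i=0..N. if i = N - j \<and> j \<le> N then fact N * pochhammer (1 + a) N * (ecoef a d e i * w j) else 0)"
      by (intro sum.cong refl) auto
    also have "\<dots> = fact N * pochhammer (1 + a) N * (if j \<le> N then ecoef a d e (N - j) * w j else 0)"
      by (cases "j \<le> N") (simp_all add: sum.delta)
    finally show "(\<Sum>i=0..N. (ecoef a d e i * w j) * (if i + j = N then fact N * pochhammer (1 + a) N else 0))
      = fact N * pochhammer (1 + a) N * (if j \<le> N then ecoef a d e (N - j) * w j else 0)" .
  qed
  also have "\<dots> = fact N * pochhammer (1+a) N * (\<Sum>j=0..k. if j \<le> N then ecoef a d e (N - j) * w j else 0)"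
    by (simp add: sum_distrib_left)
  finally show ?thesis .
qed

lemma poch_comb: "j \<le> N \<Longrightarrow> pochhammer (z::complex) N = (-1)^j * pochhammer z (N-j) * pochhammer (1 - z - of_nat N) j"
proof -
  assume jN: "j \<le> N"
  have "pochhammer z N = pochhammer z (N-j) * pochhammer (z + of_nat (N-j)) j"
    using pochhammer_product'[of z "N-j" j] jN by simp
  moreover have "pochhammer (z + of_nat (N-j)) j = (-1)^j * pochhammer (1 - z - of_nat N) j"
  proof -
    have e: "z + of_nat (N-j) = - (of_nat j - z - of_nat N)" using jN by (simp add: of_nat_diff)
    have e2: "of_nat j - z - of_nat N - of_nat j + 1 = 1 - z - of_nat N" by simp
    show ?thesis unfolding e using pochhammer_minus[of "of_nat j - z - of_nat N" j] unfolding e2 .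
  qed
  ultimately show ?thesis by (simp add: mult_ac)
qed

lemma sum_if_le:
  fixes f :: "nat \<Rightarrow> complex"
  assumes "\<And>j. k < j \<Longrightarrow> f j = 0"
  shows "(\<Sum>j=0..k. if j \<le> N then f j else 0) = (\<Sum>j=0..N. f j)"
proof -
  have "(\<Sum>j=0..k. if j \<le> N then f j else 0) = (\<Sum>j\<in>{x\<in>{0..k}. x \<le> N}. f j)"
    by (rule sym, rule sum.inter_filter) simp
  also have "{x\<in>{0..k}. x \<le> N} = {0..min k N}" by auto
  also have "(\<Sum>j\<in>{0..min k N}. f j) = (\<Sum>j=0..N. f j)"
    using assms by (intro sum.mono_neutral_left) auto
  finally show ?thesis .
qed

lemma poch_negk_zero: "k < j \<Longrightarrow> pochhammer (- of_nat k :: complex) j = 0"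
  by (rule pochhammer_of_nat_eq_0_lemma)

lemma L4i:
  fixes a d e :: complex
  assumes hA: "pochhammer (a/2) N \<noteq> 0" and hB: "pochhammer (1 + a + of_nat N) N \<noteq> 0"
    and hd: "pochhammer (1+a-d) N \<noteq> 0" and he: "pochhammer (1+a-e) N \<noteq> 0"
  shows "(\<Sum>n=0..N. T3 a N n * R2 a d e n *
      Q2_2 k (of_nat N - of_nat n) (-a - 2 * of_nat N) (d - a - of_nat N) (e - a - of_nat N))
   = pochhammer (1+a) N * pochhammer (1 - of_nat k + a - d - e) N / (pochhammer (1+a-d) N * pochhammer (1+a-e) N)"
proof -
  define w where "w = (\<lambda>j. pochhammer (- of_nat k) j / (fact j * pochhammer (d - a - of_nat N) j * pochhammer (e - a - of_nat N) j))"
  have Q: "Q2_2 k (of_nat N - of_nat n) (-a - 2 * of_nat N) (d - a - of_nat N) (e - a - of_nat N)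
    = (\<Sum>j=0..k. pochhammer (of_nat n - of_nat N) j * pochhammer (- a - of_nat N - of_nat n) j * w j)" for n
  proof -
    have e1: "- (of_nat N - of_nat n) = (of_nat n - of_nat N :: complex)" by simp
    have e2: "of_nat N - of_nat n + (-a - 2 * of_nat N) = (- a - of_nat N - of_nat n :: complex)" by simp
    show ?thesis unfolding Q2_2_def e1 e2 w_def by (simp add: mult.assoc)
  qed
  have key: "fact N * (if j \<le> N then ecoef a d e (N - j) * w j else 0)
     = (if j \<le> N then of_nat (N choose j) * pochhammer (- of_nat k) j * pochhammer (1+a-d-e) (N-j)
          / (pochhammer (1+a-d) N * pochhammer (1+a-e) N) else 0)" for j
  proof (cases "j \<le> N")
    case True
    have cd: "pochhammer (1+a-d) N = (-1)^j * pochhammer (1+a-d) (N-j) * pochhammer (d - a - of_nat N) j"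
      using poch_comb[OF True, of "1+a-d"] by (simp add: algebra_simps)
    have ce: "pochhammer (1+a-e) N = (-1)^j * pochhammer (1+a-e) (N-j) * pochhammer (e - a - of_nat N) j"
      using poch_comb[OF True, of "1+a-e"] by (simp add: algebra_simps)
    have nz: "pochhammer (1+a-d) (N-j) \<noteq> 0" "pochhammer (d - a - of_nat N) j \<noteq> 0"
      "pochhammer (1+a-e) (N-j) \<noteq> 0" "pochhammer (e - a - of_nat N) j \<noteq> 0"
      using hd he unfolding cd ce by auto
    have fN: "(fact N :: complex) = of_nat (N choose j) * fact j * fact (N - j)"
    proof -
      have "(fact N :: complex) = of_nat (fact N)" by simp
      also have "fact N = fact j * fact (N - j) * (N choose j)" using binomial_fact_lemma[OF True] by simp
      also have "(of_nat (fact j * fact (N - j) * (N choose j)) :: complex) = of_nat (N choose j) * fact j * fact (N - j)"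
        by (simp add: mult_ac)
      finally show ?thesis .
    qed
    have m1: "(-1::complex)^j * (-1)^j = 1" by (simp flip: power_add)
    have sq: "((-1::complex)^j * x * y) * ((-1)^j * u * v) = x*y*(u*v)" for x y u v
    proof -
      have "((-1::complex)^j * x * y) * ((-1)^j * u * v) = ((-1)^j * (-1)^j) * (x*y*(u*v))" by (simp only: mult_ac)
      thus ?thesis by (simp only: m1 mult_1)
    qed
    show ?thesis using True unfolding ecoef_def w_def cd ce sq fN using nz
      by (simp add: field_simps)
  next
    case False thus ?thesis by simp
  qed
  have "(\<Sum>n=0..N. T3 a N n * R2 a d e n *
      Q2_2 k (of_nat N - of_nat n) (-a - 2 * of_nat N) (d - a - of_nat N) (e - a - of_nat N))
     = fact N * pochhammer (1+a) N * (\<Sum>j=0..k. if j \<le> N then ecoef a d e (N - j) * w j else 0)"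
    unfolding Q by (rule L4gen[OF hA hB hd he])
  also have "\<dots> = pochhammer (1+a) N * (\<Sum>j=0..k. fact N * (if j \<le> N then ecoef a d e (N - j) * w j else 0))"
    by (simp add: sum_distrib_left mult_ac)
  also have "\<dots> = pochhammer (1+a) N * (\<Sum>j=0..k. if j \<le> N then of_nat (N choose j) * pochhammer (- of_nat k) j * pochhammer (1+a-d-e) (N-j)
          / (pochhammer (1+a-d) N * pochhammer (1+a-e) N) else 0)"
    unfolding key ..
  also have "\<dots> = pochhammer (1+a) N * (\<Sum>j=0..N. of_nat (N choose j) * pochhammer (- of_nat k) j * pochhammer (1+a-d-e) (N-j)
          / (pochhammer (1+a-d) N * pochhammer (1+a-e) N))"
    by (subst sum_if_le) (auto simp: poch_negk_zero)
  also have "\<dots> = pochhammer (1+a) N * pochhammer (- of_nat k + (1+a-d-e)) N / (pochhammer (1+a-d) N * pochhammer (1+a-e) N)"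
    unfolding pochhammer_binomial_sum[of "- of_nat k" "1+a-d-e" N] atMost_atLeast0
    by (simp only: sum_divide_distrib[symmetric] times_divide_eq_right)
  finally show ?thesis by (simp add: algebra_simps)
qed
lemma sign_sq: "(-1::complex)^j * (-1)^j = 1" by (simp flip: power_add)

lemma poch_neg_shift: "j \<le> N \<Longrightarrow> pochhammer (f - a - of_nat N + of_nat j :: complex) (N - j) = (-1)^(N-j) * pochhammer (1 + a - f) (N - j)"
proof -
  assume jN: "j \<le> N"
  have e: "f - a - of_nat N + of_nat j = - (a + of_nat N - of_nat j - f)" by simp
  have e2: "a + of_nat N - of_nat j - f - of_nat (N - j) + 1 = (1 + a - f :: complex)" using jN by (simp add: of_nat_diff)
  show ?thesis unfolding e using pochhammer_minus[of "a + of_nat N - of_nat j - f" "N - j"] unfolding e2 .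
qed

lemma saal_L4ii:
  fixes a d e f :: complex
  assumes s: "s = of_nat k - 1 - (-a - 2 * of_nat N) + (d - a - of_nat N) + (e - a - of_nat N) + (f - a - of_nat N)"
  shows "(\<Sum>j=0..N. of_nat (N choose j) * pochhammer (- of_nat k) j * pochhammer s j
        * ((-1)^j * pochhammer (1+a-f) (N-j)) * pochhammer (1+a-d-e) (N-j))
     = pochhammer (1 - of_nat k + a - d - e) N * pochhammer (1 - of_nat k + a - f) N"
proof -
  define C where "C = f - a - of_nat N"
  have cab: "C - (- of_nat k) - s = 1+a-d-e" unfolding C_def s by (simp add: algebra_simps)
  have cb: "C - s = 1 - of_nat k + a - d - e" unfolding C_def s by (simp add: algebra_simps)
  have ca: "pochhammer (C - (- of_nat k)) N = (-1)^N * pochhammer (1 - of_nat k + a - f) N"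
  proof -
    have e: "C - (- of_nat k) = - (a + of_nat N - of_nat k - f)" unfolding C_def by simp
    have e2: "a + of_nat N - of_nat k - f - of_nat N + 1 = (1 - of_nat k + a - f :: complex)" by simp
    show ?thesis unfolding e using pochhammer_minus[of "a + of_nat N - of_nat k - f" N] unfolding e2 .
  qed
  have S: "(\<Sum>j=0..N. of_nat (N choose j) * pochhammer (- of_nat k) j * pochhammer s j
      * pochhammer (C + of_nat j) (N-j) * pochhammer (1+a-d-e) (N-j))
      = (-1)^N * pochhammer (1 - of_nat k + a - f) N * pochhammer (1 - of_nat k + a - d - e) N"
    using saal_poly[of N "- of_nat k" s C] unfolding cab cb ca by simp
  have T: "of_nat (N choose j) * pochhammer (- of_nat k) j * pochhammer s j
        * ((-1)^j * pochhammer (1+a-f) (N-j)) * pochhammer (1+a-d-e) (N-j)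
      = (-1)^N * (of_nat (N choose j) * pochhammer (- of_nat k) j * pochhammer s j
      * pochhammer (C + of_nat j) (N-j) * pochhammer (1+a-d-e) (N-j))" if "j \<in> {0..N}" for j
  proof -
    have jN: "j \<le> N" using that by simp
    have sg: "(-1::complex)^N * (-1)^(N-j) = (-1)^j"
    proof -
      have "(-1::complex)^N = (-1)^j * (-1)^(N-j)" using jN by (simp flip: power_add)
      hence "(-1::complex)^N * (-1)^(N-j) = (-1)^j * ((-1)^(N-j) * (-1)^(N-j))" by (simp add: mult_ac)
      thus ?thesis by (simp add: sign_sq)
    qed
    show ?thesis unfolding C_def poch_neg_shift[OF jN] using sg
      by (simp add: mult_ac)
  qed
  have "(\<Sum>j=0..N. of_nat (N choose j) * pochhammer (- of_nat k) j * pochhammer s j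
        * ((-1)^j * pochhammer (1+a-f) (N-j)) * pochhammer (1+a-d-e) (N-j))
     = (-1)^N * (\<Sum>j=0..N. of_nat (N choose j) * pochhammer (- of_nat k) j * pochhammer s j
      * pochhammer (C + of_nat j) (N-j) * pochhammer (1+a-d-e) (N-j))"
    unfolding sum_distrib_left by (rule sum.cong[OF refl T])
  also have "\<dots> = ((-1)^N * (-1)^N) * pochhammer (1 - of_nat k + a - f) N * pochhammer (1 - of_nat k + a - d - e) N"
    unfolding S by (simp add: mult_ac)
  finally show ?thesis by (simp add: sign_sq mult_ac)
qed

lemma L4ii:
  fixes a d e f :: complex
  assumes hA: "pochhammer (a/2) N \<noteq> 0" and hB: "pochhammer (1 + a + of_nat N) N \<noteq> 0"
    and hd: "pochhammer (1+a-d) N \<noteq> 0" and he: "pochhammer (1+a-e) N \<noteq> 0" and hf: "pochhammer (1+a-f) N \<noteq> 0"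
  shows "(\<Sum>n=0..N. T3 a N n * R2 a d e n *
      Q2_3 k (of_nat N - of_nat n) (-a - 2 * of_nat N) (d - a - of_nat N) (e - a - of_nat N) (f - a - of_nat N))
   = pochhammer (1+a) N * pochhammer (1 - of_nat k + a - d - e) N * pochhammer (1 - of_nat k + a - f) N
      / (pochhammer (1+a-d) N * pochhammer (1+a-e) N * pochhammer (1+a-f) N)"
proof -
  define s where "s = of_nat k - 1 - (-a - 2 * of_nat N) + (d - a - of_nat N) + (e - a - of_nat N) + (f - a - of_nat N)"
  define w where "w = (\<lambda>j. pochhammer (- of_nat k) j * pochhammer s j
     / (fact j * pochhammer (d - a - of_nat N) j * pochhammer (e - a - of_nat N) j * pochhammer (f - a - of_nat N) j))"
  have Q: "Q2_3 k (of_nat N - of_nat n) (-a - 2 * of_nat N) (d - a - of_nat N) (e - a - of_nat N) (f - a - of_nat N)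
    = (\<Sum>j=0..k. pochhammer (of_nat n - of_nat N) j * pochhammer (- a - of_nat N - of_nat n) j * w j)" for n
  proof -
    have e1: "- (of_nat N - of_nat n) = (of_nat n - of_nat N :: complex)" by simp
    have e2: "of_nat N - of_nat n + (-a - 2 * of_nat N) = (- a - of_nat N - of_nat n :: complex)" by simp
    show ?thesis unfolding Q2_3_def e1 e2 w_def s_def by (simp add: mult.assoc)
  qed
  define D where "D = pochhammer (1+a-d) N * pochhammer (1+a-e) N * pochhammer (1+a-f) N"
  have key: "fact N * (if j \<le> N then ecoef a d e (N - j) * w j else 0)
     = (if j \<le> N then of_nat (N choose j) * pochhammer (- of_nat k) j * pochhammer s j
        * ((-1)^j * pochhammer (1+a-f) (N-j)) * pochhammer (1+a-d-e) (N-j) / D else 0)" for j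
  proof (cases "j \<le> N")
    case True
    have cd: "pochhammer (1+a-d) N = (-1)^j * pochhammer (1+a-d) (N-j) * pochhammer (d - a - of_nat N) j"
      using poch_comb[OF True, of "1+a-d"] by (simp add: algebra_simps)
    have ce: "pochhammer (1+a-e) N = (-1)^j * pochhammer (1+a-e) (N-j) * pochhammer (e - a - of_nat N) j"
      using poch_comb[OF True, of "1+a-e"] by (simp add: algebra_simps)
    have cf: "pochhammer (1+a-f) N = (-1)^j * pochhammer (1+a-f) (N-j) * pochhammer (f - a - of_nat N) j"
      using poch_comb[OF True, of "1+a-f"] by (simp add: algebra_simps)
    have nz: "pochhammer (1+a-d) (N-j) \<noteq> 0" "pochhammer (d - a - of_nat N) j \<noteq> 0"
      "pochhammer (1+a-e) (N-j) \<noteq> 0" "pochhammer (e - a - of_nat N) j \<noteq> 0"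
      "pochhammer (1+a-f) (N-j) \<noteq> 0" "pochhammer (f - a - of_nat N) j \<noteq> 0"
      using hd he hf unfolding cd ce cf by auto
    have fN: "(fact N :: complex) = of_nat (N choose j) * fact j * fact (N - j)"
    proof -
      have "(fact N :: complex) = of_nat (fact N)" by simp
      also have "fact N = fact j * fact (N - j) * (N choose j)" using binomial_fact_lemma[OF True] by simp
      also have "(of_nat (fact j * fact (N - j) * (N choose j)) :: complex) = of_nat (N choose j) * fact j * fact (N - j)"
        by (simp add: mult_ac)
      finally show ?thesis .
    qed
    have sq: "((-1::complex)^j * x * y) * ((-1)^j * u * v) = x*y*(u*v)" for x y u v
    proof -
      have "((-1::complex)^j * x * y) * ((-1)^j * u * v) = ((-1)^j * (-1)^j) * (x*y*(u*v))" by (simp only: mult_ac)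
      thus ?thesis by (simp only: sign_sq mult_1)
    qed
    have m: "(-1::complex)^j \<noteq> 0" by simp
    show ?thesis using True unfolding ecoef_def w_def D_def cd ce cf sq fN using nz m
      by (simp add: field_simps)
  next
    case False thus ?thesis by simp
  qed
  have "(\<Sum>n=0..N. T3 a N n * R2 a d e n *
      Q2_3 k (of_nat N - of_nat n) (-a - 2 * of_nat N) (d - a - of_nat N) (e - a - of_nat N) (f - a - of_nat N))
     = fact N * pochhammer (1+a) N * (\<Sum>j=0..k. if j \<le> N then ecoef a d e (N - j) * w j else 0)"
    unfolding Q by (rule L4gen[OF hA hB hd he])
  also have "\<dots> = pochhammer (1+a) N * (\<Sum>j=0..k. fact N * (if j \<le> N then ecoef a d e (N - j) * w j else 0))"
    by (simp add: sum_distrib_left mult_ac)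
  also have "\<dots> = pochhammer (1+a) N * (\<Sum>j=0..k. if j \<le> N then of_nat (N choose j) * pochhammer (- of_nat k) j * pochhammer s j
        * ((-1)^j * pochhammer (1+a-f) (N-j)) * pochhammer (1+a-d-e) (N-j) / D else 0)"
    unfolding key ..
  also have "\<dots> = pochhammer (1+a) N * (\<Sum>j=0..N. of_nat (N choose j) * pochhammer (- of_nat k) j * pochhammer s j
        * ((-1)^j * pochhammer (1+a-f) (N-j)) * pochhammer (1+a-d-e) (N-j) / D)"
    by (subst sum_if_le) (auto simp: poch_negk_zero)
  also have "\<dots> = pochhammer (1+a) N * (pochhammer (1 - of_nat k + a - d - e) N * pochhammer (1 - of_nat k + a - f) N) / D"
    unfolding saal_L4ii[OF s_def, symmetric]
    by (simp only: sum_divide_distrib[symmetric] times_divide_eq_right)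
  finally show ?thesis unfolding D_def by (simp add: algebra_simps)
qed

lemma R2_split:
  assumes hd: "pochhammer (1+a-d) (i+m) \<noteq> 0" and he: "pochhammer (1+a-e) (i+m) \<noteq> 0"
  shows "R2 a d e (i+m) = R2 a d e i * R2 (a + 2 * of_nat i) (d + of_nat i) (e + of_nat i) m"
proof -
  have e1: "1 + (a + 2 * of_nat i) - (d + of_nat i) = 1 + a - d + of_nat i" by simp
  have e2: "1 + (a + 2 * of_nat i) - (e + of_nat i) = 1 + a - e + of_nat i" by simp
  have sd: "pochhammer (1+a-d) (i+m) = pochhammer (1+a-d) i * pochhammer (1+a-d + of_nat i) m" by (rule pochhammer_product')
  have se: "pochhammer (1+a-e) (i+m) = pochhammer (1+a-e) i * pochhammer (1+a-e + of_nat i) m" by (rule pochhammer_product')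
  have nz: "pochhammer (1+a-d) i \<noteq> 0" "pochhammer (1+a-d + of_nat i) m \<noteq> 0"
     "pochhammer (1+a-e) i \<noteq> 0" "pochhammer (1+a-e + of_nat i) m \<noteq> 0" using hd he unfolding sd se by auto
  show ?thesis unfolding R2_def e1 e2 sd se pochhammer_product'[of d i m] pochhammer_product'[of e i m]
    using nz by (simp add: field_simps)
qed

lemma K3_prod:
  fixes a :: complex
  assumes hA: "pochhammer (a/2) N \<noteq> 0" and hB: "pochhammer (1 + a + of_nat N) N \<noteq> 0" and iN: "i \<le> N"
  shows "K3 a N i * pochhammer (1 + (a + 2 * of_nat i)) (N - i) = (-1)^i * pochhammer (- of_nat N) i * pochhammer (1 + a) N"
proof (cases "i = 0")
  case True
  thus ?thesis by (simp add: K3_def)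
next
  case False
  hence N0: "N > 0" using iN by simp
  have a0: "a \<noteq> 0" using a_nz[OF hA N0] .
  have nzA: "pochhammer (a/2) i \<noteq> 0" using poch_nz_mono[OF hA iN] .
  have nzB: "pochhammer (1 + a + of_nat N) i \<noteq> 0" using poch_nz_mono[OF hB iN] .
  have r: "pochhammer (1 + a/2) i / pochhammer (a/2) i = (a + 2 * of_nat i) / a" using half_ratio[OF a0 nzA] .
  have q: "pochhammer a (2*i) * (a + 2 * of_nat i) * pochhammer (1 + (a + 2 * of_nat i)) (N - i)
      = a * (pochhammer (1 + a) N * pochhammer (1 + a + of_nat N) i)"
  proof -
    have "pochhammer a (2*i) * (a + 2 * of_nat i) * pochhammer (1 + (a + 2 * of_nat i)) (N - i)
       = pochhammer a (2*i) * pochhammer (a + of_nat (2*i)) (Suc (N - i))"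
      by (simp add: pochhammer_rec algebra_simps)
    also have "\<dots> = pochhammer a (2*i + Suc (N - i))" by (rule pochhammer_product'[symmetric])
    also have "2*i + Suc (N - i) = Suc (N + i)" using iN by simp
    also have "pochhammer a (Suc (N + i)) = a * pochhammer (1 + a) (N + i)" by (simp add: pochhammer_rec add.commute)
    also have "pochhammer (1 + a) (N + i) = pochhammer (1 + a) N * pochhammer (1 + a + of_nat N) i"
      by (rule pochhammer_product')
    finally show ?thesis .
  qed
  have "K3 a N i * pochhammer (1 + (a + 2 * of_nat i)) (N - i)
     = ((-1)^i * pochhammer (- of_nat N) i) * (pochhammer a (2*i) * (a + 2 * of_nat i) * pochhammer (1 + (a + 2 * of_nat i)) (N - i))
       / (a * pochhammer (1 + a + of_nat N) i)"
    unfolding K3_def r using a0 nzB by (simp add: field_simps)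
  also have "\<dots> = (-1)^i * pochhammer (- of_nat N) i * pochhammer (1 + a) N" unfolding q using a0 nzB by (simp add: field_simps)
  finally show ?thesis .
qed

lemma L5gen:
  fixes a b c d e :: complex and Qf :: "complex \<Rightarrow> complex" and Lv :: "nat \<Rightarrow> complex"
  assumes hA: "pochhammer (a/2) N \<noteq> 0" and hB: "pochhammer (1 + a + of_nat N) N \<noteq> 0"
    and hb: "pochhammer (1+a-b) N \<noteq> 0" and hc: "pochhammer (1+a-c) N \<noteq> 0"
    and hd: "pochhammer (1+a-d) N \<noteq> 0" and he: "pochhammer (1+a-e) N \<noteq> 0"
    and H: "\<And>i. i \<le> N \<Longrightarrow> (\<Sum>m=0..N-i. T3 (a + 2 * of_nat i) (N - i) m * R2 (a + 2 * of_nat i) (d + of_nat i) (e + of_nat i) m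
              * Qf (of_nat (N - i) - of_nat m)) = Lv i"
  shows "(\<Sum>n=0..N. T3 a N n * R2 a b c n * R2 a d e n * Qf (of_nat N - of_nat n))
    = (\<Sum>i=0..N. ecoef a b c i * K3 a N i * R2 a d e i * Lv i)"
proof -
  have "(\<Sum>n=0..N. T3 a N n * R2 a b c n * R2 a d e n * Qf (of_nat N - of_nat n))
    = (\<Sum>n=0..N. \<Sum>i=0..N. ecoef a b c i * (T3 a N n * pochhammer (- of_nat n) i * pochhammer (a + of_nat n) i
        * R2 a d e n * Qf (of_nat N - of_nat n)))"
  proof (rule sum.cong[OF refl])
    fix n assume "n \<in> {0..N}"
    hence nN: "n \<le> N" by simp
    show "T3 a N n * R2 a b c n * R2 a d e n * Qf (of_nat N - of_nat n)
      = (\<Sum>i=0..N. ecoef a b c i * (T3 a N n * pochhammer (- of_nat n) i * pochhammer (a + of_nat n) i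
        * R2 a d e n * Qf (of_nat N - of_nat n)))"
      unfolding R2_expand[OF hb hc nN] sum_distrib_left sum_distrib_right
      by (intro sum.cong refl) (simp add: mult_ac)
  qed
  also have "\<dots> = (\<Sum>i=0..N. \<Sum>n=0..N. ecoef a b c i * (T3 a N n * pochhammer (- of_nat n) i * pochhammer (a + of_nat n) i
        * R2 a d e n * Qf (of_nat N - of_nat n)))"
    by (rule sum.swap)
  also have "\<dots> = (\<Sum>i=0..N. ecoef a b c i * K3 a N i * R2 a d e i * Lv i)"
  proof (rule sum.cong[OF refl])
    fix i assume "i \<in> {0..N}"
    hence iN: "i \<le> N" by simp
    define g where "g = (\<lambda>n. T3 a N n * pochhammer (- of_nat n) i * pochhammer (a + of_nat n) i
        * R2 a d e n * Qf (of_nat N - of_nat n))"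
    have gz: "g n = 0" if "n < i" for n
    proof -
      have "pochhammer (- of_nat n :: complex) i = 0" using that by (intro pochhammer_of_nat_eq_0_lemma)
      thus ?thesis by (simp add: g_def)
    qed
    have gm: "g (i + m) = K3 a N i * R2 a d e i * (T3 (a + 2 * of_nat i) (N - i) m * R2 (a + 2 * of_nat i) (d + of_nat i) (e + of_nat i) m
              * Qf (of_nat (N - i) - of_nat m))" if "m \<in> {0..N-i}" for m
    proof -
      have im: "i + m \<le> N" using that iN by auto
      have e1: "(of_nat N - of_nat (i + m) :: complex) = of_nat (N - i) - of_nat m" using iN by (simp add: of_nat_diff)
      have "g (i + m) = (T3 a N (i+m) * pochhammer (- of_nat (i+m)) i * pochhammer (a + of_nat (i+m)) i)
         * R2 a d e (i+m) * Qf (of_nat N - of_nat (i + m))" by (simp add: g_def)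
      also have "\<dots> = K3 a N i * T3 (a + 2 * of_nat i) (N - i) m
         * (R2 a d e i * R2 (a + 2 * of_nat i) (d + of_nat i) (e + of_nat i) m) * Qf (of_nat (N - i) - of_nat m)"
        unfolding T3_shift[OF hA hB im] R2_split[OF poch_nz_mono[OF hd im] poch_nz_mono[OF he im]] e1 ..
      finally show ?thesis by (simp add: mult_ac)
    qed
    have "(\<Sum>n=0..N. ecoef a b c i * g n) = ecoef a b c i * (\<Sum>n=0..N. g n)" by (simp add: sum_distrib_left)
    also have "(\<Sum>n=0..N. g n) = (\<Sum>m=0..N-i. g (i + m))" by (rule sum_shift_zero[OF iN gz])
    also have "\<dots> = K3 a N i * R2 a d e i * (\<Sum>m=0..N-i. T3 (a + 2 * of_nat i) (N - i) m * R2 (a + 2 * of_nat i) (d + of_nat i) (e + of_nat i) m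
              * Qf (of_nat (N - i) - of_nat m))"
      unfolding sum_distrib_left by (rule sum.cong[OF refl gm])
    also have "\<dots> = K3 a N i * R2 a d e i * Lv i" unfolding H[OF iN] ..
    finally show "(\<Sum>n=0..N. ecoef a b c i * (T3 a N n * pochhammer (- of_nat n) i * pochhammer (a + of_nat n) i
        * R2 a d e n * Qf (of_nat N - of_nat n))) = ecoef a b c i * K3 a N i * R2 a d e i * Lv i"
      unfolding g_def by (simp add: mult_ac)
  qed
  finally show ?thesis .
qed

lemma LQ_eq:
  assumes hA: "pochhammer (a/2) N \<noteq> 0" and hB: "pochhammer (1 + a + of_nat N) N \<noteq> 0"
    and hb: "pochhammer (1+a-b) N \<noteq> 0" and hc: "pochhammer (1+a-c) N \<noteq> 0"
    and hd: "pochhammer (1+a-d) N \<noteq> 0" and he: "pochhammer (1+a-e) N \<noteq> 0"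
  shows "LQ a b c d e N Qf = (\<Sum>n=0..N. T3 a N n * R2 a b c n * R2 a d e n * Qf (of_nat N - of_nat n)) / Qf (of_nat N)"
  unfolding LQ_def sum_divide_distrib
proof (rule sum.cong[OF refl])
  fix n assume "n \<in> {0..N}"
  hence nN: "n \<le> N" by simp
  note nz = poch_nz_mono[OF hA nN] poch_nz_mono[OF hB nN] poch_nz_mono[OF hb nN] poch_nz_mono[OF hc nN]
     poch_nz_mono[OF hd nN] poch_nz_mono[OF he nN]
  show "pochhammer a n * pochhammer (1 + a / 2) n * pochhammer b n * pochhammer c n * pochhammer d n * pochhammer e n *
          pochhammer (- of_nat N) n /
          (fact n * pochhammer (a / 2) n * pochhammer (1 + a - b) n * pochhammer (1 + a - c) n * pochhammer (1 + a - d) n *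
           pochhammer (1 + a - e) n * pochhammer (1 + a + of_nat N) n) *
          (Qf (of_nat N - of_nat n) / Qf (of_nat N)) =
         T3 a N n * R2 a b c n * R2 a d e n * Qf (of_nat N - of_nat n) / Qf (of_nat N)"
    unfolding T3_def R2_def using nz by (simp add: field_simps)
qed

lemma shift_nz: "pochhammer (z::complex) N \<noteq> 0 \<Longrightarrow> i \<le> N \<Longrightarrow> pochhammer (z + of_nat i) (N - i) \<noteq> 0"
  using poch_split[of i N z] by auto

lemma thm_i:
  fixes a b c d e :: complex and k N :: nat
  assumes hA: "pochhammer (a/2) N \<noteq> 0" and hb: "pochhammer (1 + a - b) N \<noteq> 0"
    and hc: "pochhammer (1 + a - c) N \<noteq> 0" and hd: "pochhammer (1 + a - d) N \<noteq> 0"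
    and he: "pochhammer (1 + a - e) N \<noteq> 0" and hB: "pochhammer (1 + a + of_nat N) N \<noteq> 0"
    and hk: "pochhammer (of_nat k - a + d + e - of_nat N) N \<noteq> 0"
  shows "(\<Sum>n=0..N. T3 a N n * R2 a b c n * R2 a d e n *
      Q2_2 k (of_nat N - of_nat n) (-a - 2 * of_nat N) (d - a - of_nat N) (e - a - of_nat N))
   = (pochhammer (1 + a) N * pochhammer (1 - of_nat k + a - d - e) N
          / (pochhammer (1 + a - d) N * pochhammer (1 + a - e) N))
       * hypF [1 + a - b - c, d, e, - of_nat N]
              [1 + a - b, 1 + a - c, of_nat k - a + d + e - of_nat N] N"
proof -
  define Lv where "Lv = (\<lambda>i. pochhammer (1 + (a + 2 * of_nat i)) (N - i) * pochhammer (1 - of_nat k + a - d - e) (N - i)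
      / (pochhammer (1 + a - d + of_nat i) (N - i) * pochhammer (1 + a - e + of_nat i) (N - i)))"
  have H: "(\<Sum>m=0..N-i. T3 (a + 2 * of_nat i) (N - i) m * R2 (a + 2 * of_nat i) (d + of_nat i) (e + of_nat i) m
              * (\<lambda>x. Q2_2 k x (-a - 2 * of_nat N) (d - a - of_nat N) (e - a - of_nat N)) (of_nat (N - i) - of_nat m)) = Lv i"
    if iN: "i \<le> N" for i
  proof -
    have q1: "1 + (a + 2 * of_nat i) - (d + of_nat i) = 1 + a - d + of_nat i" by simp
    have q2: "1 + (a + 2 * of_nat i) - (e + of_nat i) = 1 + a - e + of_nat i" by simp
    have q3: "- (a + 2 * of_nat i) - 2 * of_nat (N - i) = - a - 2 * (of_nat N :: complex)" using iN by (simp add: of_nat_diff)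
    have q4: "d + of_nat i - (a + 2 * of_nat i) - of_nat (N - i) = d - a - (of_nat N :: complex)" using iN by (simp add: of_nat_diff)
    have q5: "e + of_nat i - (a + 2 * of_nat i) - of_nat (N - i) = e - a - (of_nat N :: complex)" using iN by (simp add: of_nat_diff)
    have q6: "1 - of_nat k + (a + 2 * of_nat i) - (d + of_nat i) - (e + of_nat i) = 1 - of_nat k + a - d - e" by simp
    have hd': "pochhammer (1 + (a + 2 * of_nat i) - (d + of_nat i)) (N - i) \<noteq> 0" unfolding q1 by (rule shift_nz[OF hd iN])
    have he': "pochhammer (1 + (a + 2 * of_nat i) - (e + of_nat i)) (N - i) \<noteq> 0" unfolding q2 by (rule shift_nz[OF he iN])
    show ?thesis using L4i[OF hyps_shift[OF hA hB iN] hd' he', of k] unfolding q1 q2 q3 q4 q5 q6 Lv_def by simp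
  qed
  have "(\<Sum>n=0..N. T3 a N n * R2 a b c n * R2 a d e n *
      Q2_2 k (of_nat N - of_nat n) (-a - 2 * of_nat N) (d - a - of_nat N) (e - a - of_nat N))
     = (\<Sum>i=0..N. ecoef a b c i * K3 a N i * R2 a d e i * Lv i)"
    using L5gen[OF hA hB hb hc hd he H] by simp
  also have "\<dots> = (\<Sum>i=0..N. (pochhammer (1 + a) N * pochhammer (1 - of_nat k + a - d - e) N
          / (pochhammer (1 + a - d) N * pochhammer (1 + a - e) N)) *
       (prod_list (map (\<lambda>u. pochhammer u i) [1 + a - b - c, d, e, - of_nat N]) /
       (fact i * prod_list (map (\<lambda>l. pochhammer l i) [1 + a - b, 1 + a - c, of_nat k - a + d + e - of_nat N]))))"
  proof (rule sum.cong[OF refl])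
    fix i assume "i \<in> {0..N}"
    hence iN: "i \<le> N" by simp
    have sd: "pochhammer (1+a-d) N = pochhammer (1+a-d) i * pochhammer (1 + a - d + of_nat i) (N - i)" by (rule poch_split[OF iN])
    have se: "pochhammer (1+a-e) N = pochhammer (1+a-e) i * pochhammer (1 + a - e + of_nat i) (N - i)" by (rule poch_split[OF iN])
    have sk: "pochhammer (1 - of_nat k + a - d - e) N = (-1)^i * pochhammer (1 - of_nat k + a - d - e) (N - i)
       * pochhammer (of_nat k - a + d + e - of_nat N) i"
      using poch_comb[OF iN, of "1 - of_nat k + a - d - e"] by (simp add: algebra_simps)
    have nz: "pochhammer (1+a-d) i \<noteq> 0" "pochhammer (1 + a - d + of_nat i) (N - i) \<noteq> 0"
      "pochhammer (1+a-e) i \<noteq> 0" "pochhammer (1 + a - e + of_nat i) (N - i) \<noteq> 0"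
      using hd he unfolding sd se by auto
    have nz2: "pochhammer (1+a-b) i \<noteq> 0" "pochhammer (1+a-c) i \<noteq> 0" "pochhammer (of_nat k - a + d + e - of_nat N) i \<noteq> 0"
      using poch_nz_mono[OF hb iN] poch_nz_mono[OF hc iN] poch_nz_mono[OF hk iN] by auto
    have m: "(-1::complex)^i \<noteq> 0" by simp
    have "ecoef a b c i * K3 a N i * R2 a d e i * Lv i
      = (K3 a N i * pochhammer (1 + (a + 2 * of_nat i)) (N - i)) * (ecoef a b c i * R2 a d e i *
         (pochhammer (1 - of_nat k + a - d - e) (N - i)
      / (pochhammer (1 + a - d + of_nat i) (N - i) * pochhammer (1 + a - e + of_nat i) (N - i))))"
      unfolding Lv_def by (simp only: mult_ac times_divide_eq_right)
    also have "\<dots> = ((-1)^i * pochhammer (- of_nat N) i * pochhammer (1 + a) N) * (ecoef a b c i * R2 a d e i *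
         (pochhammer (1 - of_nat k + a - d - e) (N - i)
      / (pochhammer (1 + a - d + of_nat i) (N - i) * pochhammer (1 + a - e + of_nat i) (N - i))))"
      unfolding K3_prod[OF hA hB iN] ..
    also have "\<dots> = (pochhammer (1 + a) N * pochhammer (1 - of_nat k + a - d - e) N
          / (pochhammer (1 + a - d) N * pochhammer (1 + a - e) N)) *
       (prod_list (map (\<lambda>u. pochhammer u i) [1 + a - b - c, d, e, - of_nat N]) /
       (fact i * prod_list (map (\<lambda>l. pochhammer l i) [1 + a - b, 1 + a - c, of_nat k - a + d + e - of_nat N])))"
      unfolding sd se sk ecoef_def R2_def using nz nz2 m by (simp add: field_simps)
    finally show "ecoef a b c i * K3 a N i * R2 a d e i * Lv i = (pochhammer (1 + a) N * pochhammer (1 - of_nat k + a - d - e) N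
          / (pochhammer (1 + a - d) N * pochhammer (1 + a - e) N)) *
       (prod_list (map (\<lambda>u. pochhammer u i) [1 + a - b - c, d, e, - of_nat N]) /
       (fact i * prod_list (map (\<lambda>l. pochhammer l i) [1 + a - b, 1 + a - c, of_nat k - a + d + e - of_nat N])))" .
  qed
  also have "\<dots> = (pochhammer (1 + a) N * pochhammer (1 - of_nat k + a - d - e) N
          / (pochhammer (1 + a - d) N * pochhammer (1 + a - e) N))
       * hypF [1 + a - b - c, d, e, - of_nat N]
              [1 + a - b, 1 + a - c, of_nat k - a + d + e - of_nat N] N"
    unfolding hypF_def by (rule sum_distrib_left[symmetric])
  finally show ?thesis .
qed
lemma thm_ii:
  fixes a b c d e f :: complex and k N :: nat
  assumes hA: "pochhammer (a/2) N \<noteq> 0" and hb: "pochhammer (1 + a - b) N \<noteq> 0"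
    and hc: "pochhammer (1 + a - c) N \<noteq> 0" and hd: "pochhammer (1 + a - d) N \<noteq> 0"
    and he: "pochhammer (1 + a - e) N \<noteq> 0" and hB: "pochhammer (1 + a + of_nat N) N \<noteq> 0"
    and hk: "pochhammer (of_nat k - a + d + e - of_nat N) N \<noteq> 0"
    and hf: "pochhammer (1 + a - f) N \<noteq> 0" and hkf: "pochhammer (1 - of_nat k + a - f) N \<noteq> 0"
  shows "(\<Sum>n=0..N. T3 a N n * R2 a b c n * R2 a d e n *
      Q2_3 k (of_nat N - of_nat n) (-a - 2 * of_nat N) (d - a - of_nat N) (e - a - of_nat N) (f - a - of_nat N))
   = (pochhammer (1 + a) N * pochhammer (1 - of_nat k + a - d - e) N * pochhammer (1 - of_nat k + a - f) N
          / (pochhammer (1 + a - d) N * pochhammer (1 + a - e) N * pochhammer (1 + a - f) N))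
       * hypF [1 + a - b - c, d, e, 1 + a - f, - of_nat N]
              [1 + a - b, 1 + a - c, of_nat k - a + d + e - of_nat N, 1 - of_nat k + a - f] N"
proof -
  define Lv where "Lv = (\<lambda>i. pochhammer (1 + (a + 2 * of_nat i)) (N - i) * pochhammer (1 - of_nat k + a - d - e) (N - i)
      * pochhammer (1 - of_nat k + a - f + of_nat i) (N - i)
      / (pochhammer (1 + a - d + of_nat i) (N - i) * pochhammer (1 + a - e + of_nat i) (N - i) * pochhammer (1 + a - f + of_nat i) (N - i)))"
  have H: "(\<Sum>m=0..N-i. T3 (a + 2 * of_nat i) (N - i) m * R2 (a + 2 * of_nat i) (d + of_nat i) (e + of_nat i) m
              * (\<lambda>x. Q2_3 k x (-a - 2 * of_nat N) (d - a - of_nat N) (e - a - of_nat N) (f - a - of_nat N)) (of_nat (N - i) - of_nat m)) = Lv i"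
    if iN: "i \<le> N" for i
  proof -
    have q1: "1 + (a + 2 * of_nat i) - (d + of_nat i) = 1 + a - d + of_nat i" by simp
    have q2: "1 + (a + 2 * of_nat i) - (e + of_nat i) = 1 + a - e + of_nat i" by simp
    have q3: "- (a + 2 * of_nat i) - 2 * of_nat (N - i) = - a - 2 * (of_nat N :: complex)" using iN by (simp add: of_nat_diff)
    have q4: "d + of_nat i - (a + 2 * of_nat i) - of_nat (N - i) = d - a - (of_nat N :: complex)" using iN by (simp add: of_nat_diff)
    have q5: "e + of_nat i - (a + 2 * of_nat i) - of_nat (N - i) = e - a - (of_nat N :: complex)" using iN by (simp add: of_nat_diff)
    have q6: "1 - of_nat k + (a + 2 * of_nat i) - (d + of_nat i) - (e + of_nat i) = 1 - of_nat k + a - d - e" by simp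
    have q7: "1 - of_nat k + (a + 2 * of_nat i) - (f + of_nat i) = 1 - of_nat k + a - f + of_nat i" by simp
    have q8: "1 + (a + 2 * of_nat i) - (f + of_nat i) = 1 + a - f + of_nat i" by simp
    have q9: "f + of_nat i - (a + 2 * of_nat i) - of_nat (N - i) = f - a - (of_nat N :: complex)" using iN by (simp add: of_nat_diff)
    have hf': "pochhammer (1 + (a + 2 * of_nat i) - (f + of_nat i)) (N - i) \<noteq> 0" unfolding q8 by (rule shift_nz[OF hf iN])
    have hd': "pochhammer (1 + (a + 2 * of_nat i) - (d + of_nat i)) (N - i) \<noteq> 0" unfolding q1 by (rule shift_nz[OF hd iN])
    have he': "pochhammer (1 + (a + 2 * of_nat i) - (e + of_nat i)) (N - i) \<noteq> 0" unfolding q2 by (rule shift_nz[OF he iN])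
    show ?thesis using L4ii[OF hyps_shift[OF hA hB iN] hd' he' hf', of k] unfolding q1 q2 q3 q4 q5 q6 q7 q8 q9 Lv_def by simp
  qed
  have "(\<Sum>n=0..N. T3 a N n * R2 a b c n * R2 a d e n *
      Q2_3 k (of_nat N - of_nat n) (-a - 2 * of_nat N) (d - a - of_nat N) (e - a - of_nat N) (f - a - of_nat N))
     = (\<Sum>i=0..N. ecoef a b c i * K3 a N i * R2 a d e i * Lv i)"
    using L5gen[OF hA hB hb hc hd he H] by simp
  also have "\<dots> = (\<Sum>i=0..N. (pochhammer (1 + a) N * pochhammer (1 - of_nat k + a - d - e) N * pochhammer (1 - of_nat k + a - f) N
          / (pochhammer (1 + a - d) N * pochhammer (1 + a - e) N * pochhammer (1 + a - f) N)) *
       (prod_list (map (\<lambda>u. pochhammer u i) [1 + a - b - c, d, e, 1 + a - f, - of_nat N]) /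
       (fact i * prod_list (map (\<lambda>l. pochhammer l i) [1 + a - b, 1 + a - c, of_nat k - a + d + e - of_nat N, 1 - of_nat k + a - f]))))"
  proof (rule sum.cong[OF refl])
    fix i assume "i \<in> {0..N}"
    hence iN: "i \<le> N" by simp
    have sd: "pochhammer (1+a-d) N = pochhammer (1+a-d) i * pochhammer (1 + a - d + of_nat i) (N - i)" by (rule poch_split[OF iN])
    have se: "pochhammer (1+a-e) N = pochhammer (1+a-e) i * pochhammer (1 + a - e + of_nat i) (N - i)" by (rule poch_split[OF iN])
    have sk: "pochhammer (1 - of_nat k + a - d - e) N = (-1)^i * pochhammer (1 - of_nat k + a - d - e) (N - i)
       * pochhammer (of_nat k - a + d + e - of_nat N) i"
      using poch_comb[OF iN, of "1 - of_nat k + a - d - e"] by (simp add: algebra_simps)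
    have sf: "pochhammer (1+a-f) N = pochhammer (1+a-f) i * pochhammer (1 + a - f + of_nat i) (N - i)" by (rule poch_split[OF iN])
    have skf: "pochhammer (1 - of_nat k + a - f) N = pochhammer (1 - of_nat k + a - f) i * pochhammer (1 - of_nat k + a - f + of_nat i) (N - i)" by (rule poch_split[OF iN])
    have nz3: "pochhammer (1+a-f) i \<noteq> 0" "pochhammer (1 + a - f + of_nat i) (N - i) \<noteq> 0"
      "pochhammer (1 - of_nat k + a - f) i \<noteq> 0" "pochhammer (1 - of_nat k + a - f + of_nat i) (N - i) \<noteq> 0"
      using hf hkf unfolding sf skf by auto
    have nz: "pochhammer (1+a-d) i \<noteq> 0" "pochhammer (1 + a - d + of_nat i) (N - i) \<noteq> 0"
      "pochhammer (1+a-e) i \<noteq> 0" "pochhammer (1 + a - e + of_nat i) (N - i) \<noteq> 0"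
      using hd he unfolding sd se by auto
    have nz2: "pochhammer (1+a-b) i \<noteq> 0" "pochhammer (1+a-c) i \<noteq> 0" "pochhammer (of_nat k - a + d + e - of_nat N) i \<noteq> 0"
      using poch_nz_mono[OF hb iN] poch_nz_mono[OF hc iN] poch_nz_mono[OF hk iN] by auto
    have m: "(-1::complex)^i \<noteq> 0" by simp
    have "ecoef a b c i * K3 a N i * R2 a d e i * Lv i
      = (K3 a N i * pochhammer (1 + (a + 2 * of_nat i)) (N - i)) * (ecoef a b c i * R2 a d e i *
         (pochhammer (1 - of_nat k + a - d - e) (N - i) * pochhammer (1 - of_nat k + a - f + of_nat i) (N - i)
      / (pochhammer (1 + a - d + of_nat i) (N - i) * pochhammer (1 + a - e + of_nat i) (N - i) * pochhammer (1 + a - f + of_nat i) (N - i))))"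
      unfolding Lv_def by (simp only: mult_ac times_divide_eq_right)
    also have "\<dots> = ((-1)^i * pochhammer (- of_nat N) i * pochhammer (1 + a) N) * (ecoef a b c i * R2 a d e i *
         (pochhammer (1 - of_nat k + a - d - e) (N - i) * pochhammer (1 - of_nat k + a - f + of_nat i) (N - i)
      / (pochhammer (1 + a - d + of_nat i) (N - i) * pochhammer (1 + a - e + of_nat i) (N - i) * pochhammer (1 + a - f + of_nat i) (N - i))))"
      unfolding K3_prod[OF hA hB iN] ..
    also have "\<dots> = (pochhammer (1 + a) N * pochhammer (1 - of_nat k + a - d - e) N * pochhammer (1 - of_nat k + a - f) N
          / (pochhammer (1 + a - d) N * pochhammer (1 + a - e) N * pochhammer (1 + a - f) N)) *
       (prod_list (map (\<lambda>u. pochhammer u i) [1 + a - b - c, d, e, 1 + a - f, - of_nat N]) /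
       (fact i * prod_list (map (\<lambda>l. pochhammer l i) [1 + a - b, 1 + a - c, of_nat k - a + d + e - of_nat N, 1 - of_nat k + a - f])))"
      unfolding sd se sk sf skf ecoef_def R2_def using nz nz2 nz3 m by (simp add: field_simps)
    finally show "ecoef a b c i * K3 a N i * R2 a d e i * Lv i = (pochhammer (1 + a) N * pochhammer (1 - of_nat k + a - d - e) N * pochhammer (1 - of_nat k + a - f) N
          / (pochhammer (1 + a - d) N * pochhammer (1 + a - e) N * pochhammer (1 + a - f) N)) *
       (prod_list (map (\<lambda>u. pochhammer u i) [1 + a - b - c, d, e, 1 + a - f, - of_nat N]) /
       (fact i * prod_list (map (\<lambda>l. pochhammer l i) [1 + a - b, 1 + a - c, of_nat k - a + d + e - of_nat N, 1 - of_nat k + a - f])))" .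
  qed
  also have "\<dots> = (pochhammer (1 + a) N * pochhammer (1 - of_nat k + a - d - e) N * pochhammer (1 - of_nat k + a - f) N
          / (pochhammer (1 + a - d) N * pochhammer (1 + a - e) N * pochhammer (1 + a - f) N))
       * hypF [1 + a - b - c, d, e, 1 + a - f, - of_nat N]
              [1 + a - b, 1 + a - c, of_nat k - a + d + e - of_nat N, 1 - of_nat k + a - f] N"
    unfolding hypF_def by (rule sum_distrib_left[symmetric])
  finally show ?thesis .
qed

theorem theorem10:
  fixes a b c d e f :: complex and k N :: nat
  assumes gen: "pochhammer (a/2) N \<noteq> 0" "pochhammer (1 + a - b) N \<noteq> 0"
    "pochhammer (1 + a - c) N \<noteq> 0" "pochhammer (1 + a - d) N \<noteq> 0"
    "pochhammer (1 + a - e) N \<noteq> 0" "pochhammer (1 + a + of_nat N) N \<noteq> 0"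
  shows
   "(pochhammer (d - a - of_nat N) k \<noteq> 0 \<and> pochhammer (e - a - of_nat N) k \<noteq> 0
     \<and> pochhammer (of_nat k - a + d + e - of_nat N) N \<noteq> 0
     \<and> Q2_2 k (of_nat N) (-a - 2 * of_nat N) (d - a - of_nat N) (e - a - of_nat N) \<noteq> 0
     \<longrightarrow>
     LQ a b c d e N (\<lambda>n. Q2_2 k n (-a - 2 * of_nat N) (d - a - of_nat N) (e - a - of_nat N))
     = 1 / Q2_2 k (of_nat N) (-a - 2 * of_nat N) (d - a - of_nat N) (e - a - of_nat N)
       * (pochhammer (1 + a) N * pochhammer (1 - of_nat k + a - d - e) N
          / (pochhammer (1 + a - d) N * pochhammer (1 + a - e) N))
       * hypF [1 + a - b - c, d, e, - of_nat N]
              [1 + a - b, 1 + a - c, of_nat k - a + d + e - of_nat N] N)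
  \<and>
   (pochhammer (d - a - of_nat N) k \<noteq> 0 \<and> pochhammer (e - a - of_nat N) k \<noteq> 0
     \<and> pochhammer (f - a - of_nat N) k \<noteq> 0
     \<and> pochhammer (1 + a - f) N \<noteq> 0
     \<and> pochhammer (of_nat k - a + d + e - of_nat N) N \<noteq> 0
     \<and> pochhammer (1 - of_nat k + a - f) N \<noteq> 0
     \<and> Q2_3 k (of_nat N) (-a - 2 * of_nat N) (d - a - of_nat N) (e - a - of_nat N) (f - a - of_nat N) \<noteq> 0
     \<longrightarrow>
     LQ a b c d e N (\<lambda>n. Q2_3 k n (-a - 2 * of_nat N) (d - a - of_nat N) (e - a - of_nat N) (f - a - of_nat N))
     = 1 / Q2_3 k (of_nat N) (-a - 2 * of_nat N) (d - a - of_nat N) (e - a - of_nat N) (f - a - of_nat N)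
       * (pochhammer (1 + a) N * pochhammer (1 - of_nat k + a - d - e) N * pochhammer (1 - of_nat k + a - f) N
          / (pochhammer (1 + a - d) N * pochhammer (1 + a - e) N * pochhammer (1 + a - f) N))
       * hypF [1 + a - b - c, d, e, 1 + a - f, - of_nat N]
              [1 + a - b, 1 + a - c, of_nat k - a + d + e - of_nat N, 1 - of_nat k + a - f] N)"
proof (rule conjI; intro impI; elim conjE)
  assume hk: "pochhammer (of_nat k - a + d + e - of_nat N) N \<noteq> 0"
  let ?Q = "\<lambda>n. Q2_2 k n (-a - 2 * of_nat N) (d - a - of_nat N) (e - a - of_nat N)"
  have "LQ a b c d e N ?Q = (\<Sum>n=0..N. T3 a N n * R2 a b c n * R2 a d e n * ?Q (of_nat N - of_nat n)) / ?Q (of_nat N)"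
    by (rule LQ_eq[OF gen(1) gen(6) gen(2) gen(3) gen(4) gen(5)])
  also have "(\<Sum>n=0..N. T3 a N n * R2 a b c n * R2 a d e n * ?Q (of_nat N - of_nat n))
     = (pochhammer (1 + a) N * pochhammer (1 - of_nat k + a - d - e) N
          / (pochhammer (1 + a - d) N * pochhammer (1 + a - e) N))
       * hypF [1 + a - b - c, d, e, - of_nat N]
              [1 + a - b, 1 + a - c, of_nat k - a + d + e - of_nat N] N"
    using thm_i[OF gen(1) gen(2) gen(3) gen(4) gen(5) gen(6) hk] by simp
  finally show "LQ a b c d e N ?Q = 1 / ?Q (of_nat N)
       * (pochhammer (1 + a) N * pochhammer (1 - of_nat k + a - d - e) N
          / (pochhammer (1 + a - d) N * pochhammer (1 + a - e) N))
       * hypF [1 + a - b - c, d, e, - of_nat N]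
              [1 + a - b, 1 + a - c, of_nat k - a + d + e - of_nat N] N"
    by simp
next
  assume hk: "pochhammer (of_nat k - a + d + e - of_nat N) N \<noteq> 0"
    and hf: "pochhammer (1 + a - f) N \<noteq> 0" and hkf: "pochhammer (1 - of_nat k + a - f) N \<noteq> 0"
  let ?Q = "\<lambda>n. Q2_3 k n (-a - 2 * of_nat N) (d - a - of_nat N) (e - a - of_nat N) (f - a - of_nat N)"
  have "LQ a b c d e N ?Q = (\<Sum>n=0..N. T3 a N n * R2 a b c n * R2 a d e n * ?Q (of_nat N - of_nat n)) / ?Q (of_nat N)"
    by (rule LQ_eq[OF gen(1) gen(6) gen(2) gen(3) gen(4) gen(5)])
  also have "(\<Sum>n=0..N. T3 a N n * R2 a b c n * R2 a d e n * ?Q (of_nat N - of_nat n))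
     = (pochhammer (1 + a) N * pochhammer (1 - of_nat k + a - d - e) N * pochhammer (1 - of_nat k + a - f) N
          / (pochhammer (1 + a - d) N * pochhammer (1 + a - e) N * pochhammer (1 + a - f) N))
       * hypF [1 + a - b - c, d, e, 1 + a - f, - of_nat N]
              [1 + a - b, 1 + a - c, of_nat k - a + d + e - of_nat N, 1 - of_nat k + a - f] N"
    using thm_ii[OF gen(1) gen(2) gen(3) gen(4) gen(5) gen(6) hk hf hkf] by simp
  finally show "LQ a b c d e N ?Q = 1 / ?Q (of_nat N)
       * (pochhammer (1 + a) N * pochhammer (1 - of_nat k + a - d - e) N * pochhammer (1 - of_nat k + a - f) N
          / (pochhammer (1 + a - d) N * pochhammer (1 + a - e) N * pochhammer (1 + a - f) N))
       * hypF [1 + a - b - c, d, e, 1 + a - f, - of_nat N]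
              [1 + a - b, 1 + a - c, of_nat k - a + d + e - of_nat N, 1 - of_nat k + a - f] N"
    by simp
qed

end
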